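(* Let $r>0$, $\theta\in\mathbb{R}$, $\sigma>0$, and let $Y\sim\mathrm{VG}(r,\theta,\sigma,0)$. Let $\mu_k'=\mathbb{E}[Y^k]$ and $\mu_k=\mathbb{E}[(Y-\mathbb{E}[Y])^k]$ for integers $k\geq 0$ (so $\mu_0'=\mu_0=1$). Then \[\mu_{k+1}'=\theta(2k+r)\mu_k'+\sigma^2k(r+k-1)\mu_{k-1}', \quad k\geq1,\] and \[\mu_{k+1}=2k\theta\mu_k+k\big(\sigma^2(r+k-1)+2\theta^2r\big)\mu_{k-1}+k(k-1)r\theta\sigma^2\mu_{k-2}, \quad k\geq2.\]
   Context: For $r>0$, $\theta\in\mathbb{R}$, $\sigma>0$, $\mu\in\mathbb{R}$, the variance-gamma distribution $\mathrm{VG}(r,\theta,\sigma,\mu)$ is the probability distribution on $\mathbb{R}$ with density \[p(x) = \frac{1}{\sigma\sqrt{\pi}\, \Gamma(r/2)} \mathrm{e}^{\theta (x-\mu)/\sigma^2} \bigg(\frac{|x-\mu|}{2\sqrt{\theta^2 + \sigma^2}}\bigg)^{\frac{r-1}{2}} K_{\frac{r-1}{2}}\bigg(\frac{\sqrt{\theta^2 + \sigma^2}}{\sigma^2} |x-\mu| \bigg),\quad x\in\mathbb{R},\] where $K_\nu(x)=\int_0^\infty \mathrm{e}^{-x\cosh t}\cosh(\nu t)\,\mathrm{d}t$, $x>0$, is the modified Bessel function of the second kind. (All moments of this distribution are finite.) *)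

theory Defs
  imports "HOL-Probability.Probability"
begin

definition besselK :: "real \<Rightarrow> real \<Rightarrow> real" where
  "besselK \<nu> x = (LINT t:{0..}|lborel. exp (- x * cosh t) * cosh (\<nu> * t))"

definition vg_density :: "real \<Rightarrow> real \<Rightarrow> real \<Rightarrow> real \<Rightarrow> real \<Rightarrow> real" where
  "vg_density r \<theta> \<sigma> \<mu> x =
     1 / (\<sigma> * sqrt pi * Gamma (r / 2)) * exp (\<theta> * (x - \<mu>) / \<sigma>\<^sup>2)
     * (\<bar>x - \<mu>\<bar> / (2 * sqrt (\<theta>\<^sup>2 + \<sigma>\<^sup>2))) powr ((r - 1) / 2)
     * besselK ((r - 1) / 2) (sqrt (\<theta>\<^sup>2 + \<sigma>\<^sup>2) / \<sigma>\<^sup>2 * \<bar>x - \<mu>\<bar>)"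

end

theory Submission
  imports Defs "HOL-Real_Asymp.Real_Asymp"
begin

lemma nn_subst_exp:
  fixes f :: "real \<Rightarrow> real" and c :: real
  assumes c: "0 < c" and f[measurable]: "f \<in> borel_measurable borel" and nn: "\<And>x. 0 \<le> f x"
  shows "(\<integral>\<^sup>+x. ennreal (f x * indicator {0<..} x) \<partial>lborel)
       = (\<integral>\<^sup>+t. ennreal (f (c * exp t) * (c * exp t)) \<partial>lborel)"
proof -
  define F where "F n x = ennreal (f x * indicator {c * exp (- real n) .. c * exp (real n)} x)" for n :: nat and x
  define G where "G n t = ennreal (f (c * exp t) * (c * exp t) * indicator {- real n .. real n} t)" for n :: nat and t
  have eq: "integral\<^sup>N lborel (F n) = integral\<^sup>N lborel (G n)" for n
    unfolding F_def G_def
    by (rule nn_integral_substitution[where g = "\<lambda>t. c * exp t" and g' = "\<lambda>t. c * exp t"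
          and a = "- real n" and b = "real n", simplified])
       (auto intro!: derivative_eq_intros continuous_intros simp: c less_imp_le set_borel_measurable_def)
  have incF: "incseq F"
    unfolding incseq_def le_fun_def F_def
  proof (intro allI impI)
    fix m n :: nat and x assume "m \<le> n"
    then have "exp (- real n) \<le> exp (- real m)" "exp (real m) \<le> exp (real n)" by auto
    then have "c * exp (- real n) \<le> c * exp (- real m)" "c * exp (real m) \<le> c * exp (real n)"
      using c by auto
    then show "ennreal (f x * indicator {c * exp (- real m)..c * exp (real m)} x)
             \<le> ennreal (f x * indicator {c * exp (- real n)..c * exp (real n)} x)"
      using nn[of x] by (intro ennreal_leI) (auto split: split_indicator)
  qed
  have incG: "incseq G"
    unfolding incseq_def le_fun_def G_def
    using nn c by (auto intro!: ennreal_leI split: split_indicator)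
  have limF: "(\<lambda>n. F n x) \<longlonglongrightarrow> ennreal (f x * indicator {0<..} x)" for x
  proof (cases "x > 0")
    case True
    obtain N :: nat where N: "\<bar>ln (x / c)\<bar> \<le> real N" using real_arch_simple by blast
    have "eventually (\<lambda>n. F n x = ennreal (f x * indicator {0<..} x)) sequentially"
      unfolding eventually_sequentially
    proof (intro exI allI impI)
      fix n assume "N \<le> n"
      then have n: "\<bar>ln (x / c)\<bar> \<le> real n" using N by linarith
      have "exp (- real n) \<le> exp (ln (x / c))" using n by auto
      then have 1: "c * exp (- real n) \<le> x" using True c by (simp add: field_simps)
      have "exp (ln (x / c)) \<le> exp (real n)" using n by auto
      then have 2: "x \<le> c * exp (real n)" using True c by (simp add: field_simps)
      show "F n x = ennreal (f x * indicator {0<..} x)"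
        using 1 2 True unfolding F_def by simp
    qed
    then show ?thesis by (rule tendsto_eventually)
  next
    case False
    have "F n x = 0" for n
    proof -
      have "0 < c * exp (- real n)" using c by simp
      then show ?thesis using False unfolding F_def by simp
    qed
    then show ?thesis using False by simp
  qed
  have limG: "(\<lambda>n. G n t) \<longlonglongrightarrow> ennreal (f (c * exp t) * (c * exp t))" for t
  proof -
    obtain N :: nat where N: "\<bar>t\<bar> \<le> real N" using real_arch_simple by blast
    have "eventually (\<lambda>n. G n t = ennreal (f (c * exp t) * (c * exp t))) sequentially"
      unfolding eventually_sequentially G_def
      using N by (intro exI[of _ N]) (auto simp: indicator_def)
    then show ?thesis by (rule tendsto_eventually)
  qed
  have 1: "(\<lambda>n. integral\<^sup>N lborel (F n)) \<longlonglongrightarrow> (\<integral>\<^sup>+x. ennreal (f x * indicator {0<..} x) \<partial>lborel)"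
    by (rule nn_integral_LIMSEQ[OF incF _ limF]) (simp add: F_def)
  have 2: "(\<lambda>n. integral\<^sup>N lborel (G n)) \<longlonglongrightarrow> (\<integral>\<^sup>+t. ennreal (f (c * exp t) * (c * exp t)) \<partial>lborel)"
    by (rule nn_integral_LIMSEQ[OF incG _ limG]) (simp add: G_def)
  show ?thesis using 1 2 unfolding eq by (rule LIMSEQ_unique)
qed

lemma exp_neg_le_pow:
  fixes y :: real assumes y: "0 < y"
  shows "exp (- y) \<le> (real m / y) ^ m"
proof (cases "m = 0")
  case True then show ?thesis using y by simp
next
  case False
  have "(y / real m) ^ m \<le> exp (y / real m) ^ m"
    using y by (intro power_mono) (auto intro: order.trans[OF _ exp_ge_add_one_self])
  also have "\<dots> = exp y" using False by (simp add: exp_of_nat_mult[symmetric])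
  finally have "(y / real m) ^ m \<le> exp y" .
  then have "1 \<le> exp y * (real m / y) ^ m"
    using y False by (simp add: power_divide field_simps)
  then show ?thesis by (simp add: exp_minus field_simps)
qed

lemma gamma_nn_finite:
  fixes s A :: real assumes s: "0 < s" and A: "0 < A"
  shows "(\<integral>\<^sup>+g. ennreal (g powr (s - 1) * exp (- A * g) * indicator {0<..} g) \<partial>lborel) < \<infinity>"
proof -
  let ?f = "\<lambda>g. ennreal (g powr (s - 1) * exp (- A * g) * indicator {0<..} g)"
  have "(\<integral>\<^sup>+g. ?f g \<partial>lborel) = \<bar>1/A\<bar> * (\<integral>\<^sup>+x. ?f (0 + 1/A * x) \<partial>lborel)"
    using A by (intro nn_integral_real_affine) auto
  also have "(\<integral>\<^sup>+x. ?f (0 + 1/A * x) \<partial>lborel)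
      = (\<integral>\<^sup>+x. ennreal (A powr (1 - s)) * (ennreal (x powr (s - 1) / exp x) * indicator {0..} x) \<partial>lborel)"
  proof (intro nn_integral_cong)
    fix x :: real
    show "?f (0 + 1/A * x) = ennreal (A powr (1 - s)) * (ennreal (x powr (s - 1) / exp x) * indicator {0..} x)"
    proof (cases "x > 0")
      case True
      have "(x / A) powr (s - 1) = A powr (1 - s) * x powr (s - 1)"
        using True A by (simp add: powr_divide powr_diff)
      then show ?thesis using True A
      proof -
        have e: "- A * (0 + 1 / A * x) = - x" using A by simp
        have "?f (0 + 1/A * x) = ennreal (A powr (1 - s) * x powr (s - 1) * exp (- x))"
          using True A by (simp only: e) (simp add: \<open>(x / A) powr (s - 1) = _\<close>)
        then show ?thesis using True A
          by (simp add: ennreal_mult'[symmetric] exp_minus divide_inverse mult.assoc)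
      qed
    next
      case False
      then have "\<not> 0 < x / A" using A by (simp add: zero_less_divide_iff)
      then show ?thesis using False by (simp add: indicator_def)
    qed
  qed
  also have "\<dots> = ennreal (A powr (1 - s)) * (\<integral>\<^sup>+x. ennreal (x powr (s - 1) / exp x) * indicator {0..} x \<partial>lborel)"
    by (intro nn_integral_cmult) auto
  also have "(\<integral>\<^sup>+x. ennreal (x powr (s - 1) / exp x) * indicator {0..} x \<partial>lborel) = ennreal (Gamma s)"
    by (intro nn_integral_has_integral_lebesgue' Gamma_integral_real s) auto
  finally show ?thesis by (simp add: ennreal_mult_less_top)
qed

lemma bessel_nn_finite:
  fixes A B \<nu> :: real assumes A: "0 < A" and B: "0 < B"
  shows "(\<integral>\<^sup>+g. ennreal (g powr (\<nu> - 1) * exp (- A * g - B / g) * indicator {0<..} g) \<partial>lborel) < \<infinity>"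
proof -
  obtain m :: nat where m: "- \<nu> < real m" using reals_Archimedean2 by blast
  have "(\<integral>\<^sup>+g. ennreal (g powr (\<nu> - 1) * exp (- A * g - B / g) * indicator {0<..} g) \<partial>lborel)
     \<le> (\<integral>\<^sup>+g. ennreal ((real m / B) ^ m) * ennreal (g powr ((\<nu> + real m) - 1) * exp (- A * g) * indicator {0<..} g) \<partial>lborel)"
  proof (intro nn_integral_mono)
    fix g :: real
    show "ennreal (g powr (\<nu> - 1) * exp (- A * g - B / g) * indicator {0<..} g)
        \<le> ennreal ((real m / B) ^ m) * ennreal (g powr ((\<nu> + real m) - 1) * exp (- A * g) * indicator {0<..} g)"
    proof (cases "g > 0")
      case True
      have "exp (- (B / g)) \<le> (real m / (B / g)) ^ m" using True B by (intro exp_neg_le_pow) simp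
      also have "\<dots> = (real m / B) ^ m * g ^ m" using True B by (simp add: power_divide field_simps)
      finally have e: "exp (- (B / g)) \<le> (real m / B) ^ m * g ^ m" .
      have "g powr (\<nu> - 1) * exp (- A * g - B / g) = g powr (\<nu> - 1) * exp (- A * g) * exp (- (B / g))"
        by (simp add: exp_diff exp_minus field_simps)
      also have "\<dots> \<le> g powr (\<nu> - 1) * exp (- A * g) * ((real m / B) ^ m * g ^ m)"
        by (intro mult_left_mono e) auto
      also have "\<dots> = (real m / B) ^ m * (g powr ((\<nu> + real m) - 1) * exp (- A * g))"
      proof -
        have "g powr ((\<nu> + real m) - 1) = g powr (\<nu> - 1) * g ^ m"
          using True by (simp add: powr_add[symmetric] powr_realpow[symmetric] algebra_simps)
        then show ?thesis by (simp add: algebra_simps)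
      qed
      finally show ?thesis using True B by (simp add: ennreal_mult'[symmetric])
    qed simp
  qed
  also have "\<dots> = ennreal ((real m / B) ^ m) * (\<integral>\<^sup>+g. ennreal (g powr ((\<nu> + real m) - 1) * exp (- A * g) * indicator {0<..} g) \<partial>lborel)"
    by (intro nn_integral_cmult) auto
  also have "\<dots> < \<infinity>"
    using gamma_nn_finite[of "\<nu> + real m" A] m A by (simp add: ennreal_mult_less_top)
  finally show ?thesis .
qed

lemma borel_measurable_cosh_real[measurable]: "(cosh :: real \<Rightarrow> real) \<in> borel_measurable borel"
proof -
  have eq: "cosh = (\<lambda>x::real. (exp x + exp (- x)) / 2)" by (rule ext) (simp add: cosh_field_def)
  show ?thesis unfolding eq by measurable
qed

lemma bessel_nn:
  fixes A B \<nu> :: real assumes A: "0 < A" and B: "0 < B"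
  shows "(\<integral>\<^sup>+g. ennreal (g powr (\<nu> - 1) * exp (- A * g - B / g) * indicator {0<..} g) \<partial>lborel)
       = ennreal (2 * (B / A) powr (\<nu> / 2) * besselK \<nu> (2 * sqrt (A * B)))"
proof -
  define c where "c = sqrt (B / A)"
  define z where "z = 2 * sqrt (A * B)"
  define h where "h t = exp (\<nu> * t) * exp (- z * cosh t)" for t
  define I where "I = (\<integral>\<^sup>+t. ennreal (indicator {0..} t * (exp (- z * cosh t) * cosh (\<nu> * t))) \<partial>lborel)"
  have c: "0 < c" using A B by (simp add: c_def)
  have Ac: "A * c = sqrt (A * B)"
  proof -
    have "A * c = sqrt A * sqrt A * (sqrt B / sqrt A)" using A by (simp add: c_def real_sqrt_divide)
    also have "\<dots> = sqrt (A * B)" using A B by (simp add: real_sqrt_mult field_simps)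
    finally show ?thesis .
  qed
  have Bc: "B / c = sqrt (A * B)"
  proof -
    have "B / c = sqrt B * sqrt B / (sqrt B / sqrt A)" using B by (simp add: c_def real_sqrt_divide)
    also have "\<dots> = sqrt (A * B)" using A B by (simp add: real_sqrt_mult field_simps)
    finally show ?thesis .
  qed
  let ?f = "\<lambda>g. g powr (\<nu> - 1) * exp (- A * g - B / g)"
  have s1: "(\<integral>\<^sup>+g. ennreal (?f g * indicator {0<..} g) \<partial>lborel)
      = (\<integral>\<^sup>+t. ennreal (?f (c * exp t) * (c * exp t)) \<partial>lborel)"
    by (rule nn_subst_exp[OF c]) auto
  have s2: "?f (c * exp t) * (c * exp t) = c powr \<nu> * h t" for t
  proof -
    have "(c * exp t) powr (\<nu> - 1) * (c * exp t) = (c * exp t) powr \<nu>"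
      using c by (simp add: powr_diff)
    also have "\<dots> = c powr \<nu> * exp (\<nu> * t)"
      using c by (simp add: powr_mult exp_powr_real mult.commute)
    finally have 1: "(c * exp t) powr (\<nu> - 1) * (c * exp t) = c powr \<nu> * exp (\<nu> * t)" .
    have "- A * (c * exp t) - B / (c * exp t) = - (A * c) * exp t - (B / c) * exp (- t)"
      by (simp add: exp_minus field_simps)
    also have "\<dots> = - z * cosh t"
      unfolding Ac Bc z_def cosh_field_def by (simp add: field_simps)
    finally have 2: "- A * (c * exp t) - B / (c * exp t) = - z * cosh t" .
    show ?thesis unfolding h_def
      using 1 2 by (metis (no_types, lifting) mult.assoc mult.commute)
  qed
  have s3: "(\<integral>\<^sup>+t. ennreal (?f (c * exp t) * (c * exp t)) \<partial>lborel)
      = ennreal (c powr \<nu>) * (\<integral>\<^sup>+t. ennreal (h t) \<partial>lborel)"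
  proof -
    have hm: "(\<lambda>t. ennreal (h t)) \<in> borel_measurable lborel" unfolding h_def by measurable
    have "(\<integral>\<^sup>+t. ennreal (?f (c * exp t) * (c * exp t)) \<partial>lborel)
       = (\<integral>\<^sup>+t. ennreal (c powr \<nu>) * ennreal (h t) \<partial>lborel)"
      unfolding s2 by (intro nn_integral_cong) (simp add: h_def ennreal_mult)
    also have "\<dots> = ennreal (c powr \<nu>) * (\<integral>\<^sup>+t. ennreal (h t) \<partial>lborel)"
      using hm by (rule nn_integral_cmult)
    finally show ?thesis .
  qed
  have s4: "(\<integral>\<^sup>+t. ennreal (h t) \<partial>lborel)
      = (\<integral>\<^sup>+t. ennreal (h t * indicator {0..} t) \<partial>lborel) + (\<integral>\<^sup>+t. ennreal (h t * indicator {..<0} t) \<partial>lborel)"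
    by (subst nn_integral_add[symmetric])
       (auto simp: h_def intro!: nn_integral_cong split: split_indicator)
  have s5: "(\<integral>\<^sup>+t. ennreal (h t * indicator {..<0} t) \<partial>lborel)
      = (\<integral>\<^sup>+t. ennreal (h (- t) * indicator {0..} t) \<partial>lborel)"
  proof -
    have m: "(\<lambda>t. ennreal (h t * indicator {..<0} t)) \<in> borel_measurable borel"
      unfolding h_def by measurable
    have "(\<integral>\<^sup>+t. ennreal (h t * indicator {..<0} t) \<partial>lborel)
       = (\<integral>\<^sup>+t. ennreal (h (0 + -1 * t) * indicator {..<0} (0 + -1 * t)) \<partial>lborel)"
      using nn_integral_real_affine[OF m, of "-1" 0] by simp
    also have "\<dots> = (\<integral>\<^sup>+t. ennreal (h (- t) * indicator {0..} t) \<partial>lborel)"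
      by (auto intro!: nn_integral_cong_AE simp: indicator_def
          intro: AE_mp[OF AE_lborel_singleton[of 0]])
    finally show ?thesis .
  qed
  have s6: "(\<integral>\<^sup>+t. ennreal (h t * indicator {0..} t) \<partial>lborel) + (\<integral>\<^sup>+t. ennreal (h (- t) * indicator {0..} t) \<partial>lborel)
      = 2 * I"
  proof -
    have "(\<integral>\<^sup>+t. ennreal (h t * indicator {0..} t) \<partial>lborel) + (\<integral>\<^sup>+t. ennreal (h (- t) * indicator {0..} t) \<partial>lborel)
        = (\<integral>\<^sup>+t. ennreal (h t * indicator {0..} t) + ennreal (h (- t) * indicator {0..} t) \<partial>lborel)"
      by (subst nn_integral_add) (auto simp: h_def)
    also have "\<dots> = (\<integral>\<^sup>+t. 2 * ennreal (indicator {0..} t * (exp (- z * cosh t) * cosh (\<nu> * t))) \<partial>lborel)"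
    proof (intro nn_integral_cong)
      fix t :: real
      have "h t + h (- t) = 2 * (exp (- z * cosh t) * cosh (\<nu> * t))"
        unfolding h_def cosh_field_def by (simp add: field_simps)
      then have eq: "h t * indicator {0..} t + h (- t) * indicator {0..} t
          = 2 * (indicator {0..} t * (exp (- z * cosh t) * cosh (\<nu> * t)))"
        by (auto split: split_indicator)
      have nn: "0 \<le> h t * indicator {0..} t" "0 \<le> h (- t) * indicator {0..} t"
        by (simp_all add: h_def)
      have nn2: "0 \<le> indicator {0..} t * (exp (- z * cosh t) * cosh (\<nu> * t))"
        by simp
      show "ennreal (h t * indicator {0..} t) + ennreal (h (- t) * indicator {0..} t)
           = 2 * ennreal (indicator {0..} t * (exp (- z * cosh t) * cosh (\<nu> * t)))"
        using nn nn2 by (simp only: ennreal_plus[symmetric] eq ennreal_mult'' ennreal_numeral)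
    qed
    also have "\<dots> = 2 * I" unfolding I_def by (rule nn_integral_cmult) auto
    finally show ?thesis .
  qed
  have LHS: "(\<integral>\<^sup>+g. ennreal (?f g * indicator {0<..} g) \<partial>lborel) = ennreal (c powr \<nu>) * (2 * I)"
    using s1 s3 s4 s5 s6 by simp
  have fin: "I < \<infinity>"
  proof -
    have "ennreal (c powr \<nu>) * (2 * I) < \<infinity>" using LHS bessel_nn_finite[OF A B, of \<nu>] by simp
    then show ?thesis using c by (auto simp: ennreal_mult_less_top ennreal_mult_eq_top_iff)
  qed
  have bK: "besselK \<nu> z = enn2real I"
    unfolding besselK_def set_lebesgue_integral_def I_def
    by (subst integral_eq_nn_integral) (auto intro!: mult_nonneg_nonneg)
  have cp: "c powr \<nu> = (B / A) powr (\<nu> / 2)"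
    using A B by (simp add: c_def powr_half_sqrt[symmetric] powr_powr)
  have "ennreal (c powr \<nu>) * (2 * I) = ennreal (2 * c powr \<nu> * enn2real I)"
    using fin c by (simp add: ennreal_mult'' ennreal_enn2real_if mult_ac)
  then show ?thesis using LHS bK cp z_def by simp
qed

definition wgt :: "real \<Rightarrow> real \<Rightarrow> real" where
  "wgt r g = (if 0 < g then g powr (r / 2 - 1) * exp (- g / 2) else 0)"

definition cst :: "real \<Rightarrow> real" where
  "cst r = 1 / (2 powr (r / 2) * Gamma (r / 2) * sqrt (2 * pi))"

definition kern :: "real \<Rightarrow> real \<Rightarrow> real \<Rightarrow> real \<Rightarrow> real \<Rightarrow> real" where
  "kern r \<theta> \<sigma> x g = cst r * wgt r g * exp (- ((x - \<theta> * g) / (\<sigma> * sqrt g))\<^sup>2 / 2) / (\<sigma> * sqrt g)"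

lemma cst_pos: "0 < r \<Longrightarrow> 0 < cst r"
  by (simp add: cst_def Gamma_real_pos)

lemma wgt_nonneg: "0 \<le> wgt r g"
  by (simp add: wgt_def)

lemma kern_nonneg: assumes "0 < r" "0 < \<sigma>" shows "0 \<le> kern r \<theta> \<sigma> x g"
proof (cases "0 < g")
  case True
  then show ?thesis unfolding kern_def using cst_pos[of r] wgt_nonneg[of r g] assms
    by (intro divide_nonneg_nonneg mult_nonneg_nonneg) (auto intro: less_imp_le)
qed (simp add: kern_def wgt_def)

lemma rearr: "(c::real) * (p * e1) * e2 / (s * q) = c / s * (p / q) * (e1 * e2)"
  by (simp add: divide_inverse mult_ac)

lemma kern_pw:
  fixes r \<theta> \<sigma> x g :: real
  assumes r: "0 < r" and s: "0 < \<sigma>"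
  defines "A \<equiv> (\<sigma>\<^sup>2 + \<theta>\<^sup>2) / (2 * \<sigma>\<^sup>2)" and "B \<equiv> x\<^sup>2 / (2 * \<sigma>\<^sup>2)"
  shows "kern r \<theta> \<sigma> x g = (cst r / \<sigma> * exp (\<theta> * x / \<sigma>\<^sup>2))
      * (g powr ((r - 1) / 2 - 1) * exp (- A * g - B / g) * indicator {0<..} g)"
proof (cases "0 < g")
  case True
  have sq: "sqrt g = g powr (1/2)" using True by (simp add: powr_half_sqrt)
  have p: "g powr (r / 2 - 1) / sqrt g = g powr ((r - 1) / 2 - 1)"
  proof -
    have "g powr (r / 2 - 1) / g powr (1/2) = g powr (r / 2 - 1 - 1/2)" by (rule powr_diff[symmetric])
    also have "\<dots> = g powr ((r - 1) / 2 - 1)"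
      by (intro arg_cong[where f="\<lambda>a. g powr a"]) (simp add: field_simps)
    finally show ?thesis unfolding sq .
  qed
  have e: "- g / 2 - ((x - \<theta> * g) / (\<sigma> * sqrt g))\<^sup>2 / 2 = \<theta> * x / \<sigma>\<^sup>2 - A * g - B / g"
  proof -
    have "((x - \<theta> * g) / (\<sigma> * sqrt g))\<^sup>2 = (x - \<theta> * g)\<^sup>2 / (\<sigma>\<^sup>2 * g)"
      using True by (simp add: power_divide power_mult_distrib)
    then show ?thesis using True s unfolding A_def B_def
      by (simp add: field_simps power2_eq_square)
  qed
  have "kern r \<theta> \<sigma> x g = cst r / \<sigma> * (g powr (r / 2 - 1) / sqrt g) * exp (- g / 2 - ((x - \<theta> * g) / (\<sigma> * sqrt g))\<^sup>2 / 2)"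
  proof -
    have ex: "exp (a - b) = exp a * exp (- b)" for a b :: real by (simp add: exp_add[symmetric])
    show ?thesis
      unfolding kern_def wgt_def ex using True
      by (simp only: if_True rearr minus_divide_left)
  qed
  also have "\<dots> = (cst r / \<sigma> * exp (\<theta> * x / \<sigma>\<^sup>2)) * (g powr ((r - 1) / 2 - 1) * exp (- A * g - B / g))"
  proof -
    have "exp (\<theta> * x / \<sigma>\<^sup>2 - A * g - B / g) = exp (\<theta> * x / \<sigma>\<^sup>2) * exp (- A * g - B / g)"
      by (simp add: exp_add[symmetric] algebra_simps)
    then show ?thesis unfolding p e by (simp add: mult_ac)
  qed
  finally show ?thesis using True by simp
next
  case False
  then show ?thesis by (simp add: kern_def wgt_def)
qed

lemma const_eq:
  assumes r: "0 < r"
  shows "cst r / \<sigma> * 2 * 2 powr ((r - 1) / 2) = 1 / (\<sigma> * sqrt pi * Gamma (r / 2))"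
proof -
  have "2 powr (r / 2) * (2::real) powr (1/2) = 2 powr (r / 2 + 1 / 2)" by (rule powr_add[symmetric])
  also have "\<dots> = 2 powr ((r - 1) / 2 + 1)"
    by (intro arg_cong[where f="\<lambda>a. (2::real) powr a"]) (simp add: field_simps)
  also have "\<dots> = 2 * 2 powr ((r - 1) / 2)" by (simp add: powr_add)
  finally have "2 * 2 powr ((r - 1) / 2) = 2 powr (r / 2) * (2::real) powr (1/2)" by simp
  also have "\<dots> = 2 powr (r / 2) * sqrt 2" by (simp add: powr_half_sqrt)
  finally have 1: "2 * 2 powr ((r - 1) / 2) = 2 powr (r / 2) * sqrt 2" .
  have g: "Gamma (r / 2) > 0" using r by (simp add: Gamma_real_pos)
  have "cst r / \<sigma> * 2 * 2 powr ((r - 1) / 2) = cst r / \<sigma> * (2 powr (r / 2) * sqrt 2)"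
    using 1 by (simp add: mult.assoc)
  also have "\<dots> = 1 / (\<sigma> * sqrt pi * Gamma (r / 2))"
    unfolding cst_def using g by (simp add: real_sqrt_mult field_simps)
  finally show ?thesis .
qed

lemma mixture:
  fixes r \<theta> \<sigma> x :: real
  assumes r: "0 < r" and s: "0 < \<sigma>" and x: "x \<noteq> 0"
  shows "(\<integral>\<^sup>+g. ennreal (kern r \<theta> \<sigma> x g) \<partial>lborel) = ennreal (vg_density r \<theta> \<sigma> 0 x)"
proof -
  define A where "A = (\<sigma>\<^sup>2 + \<theta>\<^sup>2) / (2 * \<sigma>\<^sup>2)"
  define B where "B = x\<^sup>2 / (2 * \<sigma>\<^sup>2)"
  define \<nu> where "\<nu> = (r - 1) / 2"
  define C where "C = cst r / \<sigma> * exp (\<theta> * x / \<sigma>\<^sup>2)"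
  define S where "S = sqrt (\<theta>\<^sup>2 + \<sigma>\<^sup>2)"
  have A: "0 < A" using s by (simp add: A_def add_pos_nonneg)
  have B: "0 < B" using s x by (simp add: B_def)
  have C: "0 \<le> C" using cst_pos[OF r] s by (simp add: C_def)
  have S: "0 < S" using s by (simp add: S_def add_nonneg_pos)
  have "(\<integral>\<^sup>+g. ennreal (kern r \<theta> \<sigma> x g) \<partial>lborel)
      = (\<integral>\<^sup>+g. ennreal C * ennreal (g powr (\<nu> - 1) * exp (- A * g - B / g) * indicator {0<..} g) \<partial>lborel)"
  proof (intro nn_integral_cong)
    fix g :: real
    have kp: "kern r \<theta> \<sigma> x g = C * (g powr (\<nu> - 1) * exp (- A * g - B / g) * indicator {0<..} g)"
      using kern_pw[OF r s, of \<theta> x g] unfolding A_def B_def \<nu>_def C_def by simp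
    show "ennreal (kern r \<theta> \<sigma> x g) = ennreal C * ennreal (g powr (\<nu> - 1) * exp (- A * g - B / g) * indicator {0<..} g)"
      unfolding kp by (rule ennreal_mult[OF C]) simp
  qed
  also have "\<dots> = ennreal C * (\<integral>\<^sup>+g. ennreal (g powr (\<nu> - 1) * exp (- A * g - B / g) * indicator {0<..} g) \<partial>lborel)"
    by (intro nn_integral_cmult) auto
  also have "\<dots> = ennreal C * ennreal (2 * (B / A) powr (\<nu> / 2) * besselK \<nu> (2 * sqrt (A * B)))"
    using bessel_nn[OF A B, of \<nu>] by simp
  also have "\<dots> = ennreal (C * (2 * (B / A) powr (\<nu> / 2) * besselK \<nu> (2 * sqrt (A * B))))"
    by (rule ennreal_mult'[symmetric, OF C])
  also have "C * (2 * (B / A) powr (\<nu> / 2) * besselK \<nu> (2 * sqrt (A * B))) = vg_density r \<theta> \<sigma> 0 x"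
  proof -
    have e1: "2 * sqrt (A * B) = S / \<sigma>\<^sup>2 * \<bar>x\<bar>"
    proof -
      have "A * B = (S / \<sigma>\<^sup>2 * \<bar>x\<bar> / 2)\<^sup>2"
        using s unfolding A_def B_def S_def
        by (simp add: power_mult_distrib power_divide field_simps add.commute)
      then have "sqrt (A * B) = S / \<sigma>\<^sup>2 * \<bar>x\<bar> / 2" using S by simp
      then show ?thesis by simp
    qed
    have e2: "(B / A) powr (\<nu> / 2) = (\<bar>x\<bar> / S) powr \<nu>"
    proof -
      have "B / A = (\<bar>x\<bar> / S) powr 2"
        using s S x unfolding A_def B_def S_def
        by (simp add: powr_numeral power_divide field_simps add.commute)
      then show ?thesis by (simp add: powr_powr)
    qed
    have e3: "(\<bar>x\<bar> / S) powr \<nu> = 2 powr \<nu> * (\<bar>x\<bar> / (2 * S)) powr \<nu>"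
    proof -
      have "\<bar>x\<bar> / S = 2 * (\<bar>x\<bar> / (2 * S))" by simp
      then show ?thesis by (metis powr_mult abs_ge_zero divide_nonneg_nonneg less_imp_le S zero_le_numeral mult_nonneg_nonneg)
    qed
    have "C * (2 * (B / A) powr (\<nu> / 2) * besselK \<nu> (2 * sqrt (A * B)))
        = (cst r / \<sigma> * 2 * 2 powr \<nu>) * exp (\<theta> * x / \<sigma>\<^sup>2) * (\<bar>x\<bar> / (2 * S)) powr \<nu> * besselK \<nu> (S / \<sigma>\<^sup>2 * \<bar>x\<bar>)"
      unfolding e1 e2 e3 C_def by (simp add: mult_ac)
    also have "\<dots> = vg_density r \<theta> \<sigma> 0 x"
      unfolding \<nu>_def const_eq[OF r] vg_density_def S_def by simp
    finally show ?thesis .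
  qed
  finally show ?thesis .
qed

definition Wt :: "real \<Rightarrow> real \<times> real \<Rightarrow> real" where
  "Wt r \<omega> = cst r * wgt r (fst \<omega>) * exp (- (snd \<omega>)\<^sup>2 / 2)"

definition Tm :: "real \<Rightarrow> real \<Rightarrow> real \<times> real \<Rightarrow> real" where
  "Tm \<theta> \<sigma> \<omega> = \<theta> * fst \<omega> + \<sigma> * sqrt (fst \<omega>) * snd \<omega>"

lemma wgt_meas[measurable]: "wgt r \<in> borel_measurable borel"
  unfolding wgt_def[abs_def] by measurable

lemma Wt_meas[measurable]: "Wt r \<in> borel_measurable (lborel \<Otimes>\<^sub>M lborel)"
  unfolding Wt_def[abs_def] by measurable

lemma Tm_meas[measurable]: "Tm \<theta> \<sigma> \<in> borel_measurable (lborel \<Otimes>\<^sub>M lborel)"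
  unfolding Tm_def[abs_def] by measurable

lemma kern_meas[measurable]: "(\<lambda>(x, g). kern r \<theta> \<sigma> x g) \<in> borel_measurable (lborel \<Otimes>\<^sub>M lborel)"
  unfolding kern_def[abs_def] by measurable

lemma kern_meas2[measurable]: "(\<lambda>(g, x). kern r \<theta> \<sigma> x g) \<in> borel_measurable (lborel \<Otimes>\<^sub>M lborel)"
  unfolding kern_def[abs_def] by measurable

lemma kern_meas1[measurable]: "kern r \<theta> \<sigma> x \<in> borel_measurable borel"
  unfolding kern_def[abs_def] by measurable

lemma kern_meas0[measurable]: "(\<lambda>x. kern r \<theta> \<sigma> x g) \<in> borel_measurable borel"
  unfolding kern_def[abs_def] by measurable

lemma Wt_nonneg: "0 < r \<Longrightarrow> 0 \<le> Wt r \<omega>"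
  unfolding Wt_def using cst_pos[of r] wgt_nonneg[of r] by (simp add: less_imp_le)

lemma inner_affine:
  assumes r: "0 < r" and s: "0 < \<sigma>" and A[measurable]: "A \<in> sets borel"
  shows "(\<integral>\<^sup>+z. ennreal (Wt r (g, z)) * indicator A (Tm \<theta> \<sigma> (g, z)) \<partial>lborel)
       = (\<integral>\<^sup>+x. ennreal (kern r \<theta> \<sigma> x g) * indicator A x \<partial>lborel)"
proof (cases "0 < g")
  case True
  define a where "a = \<sigma> * sqrt g"
  have a: "0 < a" using True s by (simp add: a_def)
  let ?F = "\<lambda>x. ennreal (kern r \<theta> \<sigma> x g) * indicator A x"
  have Fm: "?F \<in> borel_measurable borel" by measurable
  have "(\<integral>\<^sup>+x. ?F x \<partial>lborel) = \<bar>a\<bar> * (\<integral>\<^sup>+z. ?F (\<theta> * g + a * z) \<partial>lborel)"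
    by (rule nn_integral_real_affine[OF Fm]) (use a in simp)
  also have "\<dots> = (\<integral>\<^sup>+z. ennreal a * ?F (\<theta> * g + a * z) \<partial>lborel)"
    using a by (subst nn_integral_cmult) auto
  also have "\<dots> = (\<integral>\<^sup>+z. ennreal (Wt r (g, z)) * indicator A (Tm \<theta> \<sigma> (g, z)) \<partial>lborel)"
  proof (intro nn_integral_cong)
    fix z :: real
    have k: "kern r \<theta> \<sigma> (\<theta> * g + a * z) g = cst r * wgt r g * exp (- z\<^sup>2 / 2) / a"
      unfolding kern_def using a by (simp add: a_def)
    have w: "a * (cst r * wgt r g * exp (- z\<^sup>2 / 2) / a) = Wt r (g, z)"
      using a by (simp add: Wt_def)
    have t: "Tm \<theta> \<sigma> (g, z) = \<theta> * g + a * z" by (simp add: Tm_def a_def)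
    have nn: "0 \<le> cst r * wgt r g * exp (- z\<^sup>2 / 2) / a"
      using cst_pos[OF r] wgt_nonneg[of r g] a by simp
    show "ennreal a * ?F (\<theta> * g + a * z) = ennreal (Wt r (g, z)) * indicator A (Tm \<theta> \<sigma> (g, z))"
      by (simp only: k t mult.assoc[symmetric] ennreal_mult[symmetric, OF less_imp_le[OF a] nn] w)
  qed
  finally show ?thesis ..
next
  case False
  then show ?thesis by (simp add: Wt_def kern_def wgt_def)
qed

lemma distr_eq:
  assumes r: "0 < r" and s: "0 < \<sigma>"
  shows "distr (density (lborel \<Otimes>\<^sub>M lborel) (\<lambda>\<omega>. ennreal (Wt r \<omega>))) lborel (Tm \<theta> \<sigma>)
       = density lborel (\<lambda>x. ennreal (vg_density r \<theta> \<sigma> 0 x))"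
proof (rule measure_eqI)
  show "sets (distr (density (lborel \<Otimes>\<^sub>M lborel) (\<lambda>\<omega>. ennreal (Wt r \<omega>))) lborel (Tm \<theta> \<sigma>))
      = sets (density lborel (\<lambda>x. ennreal (vg_density r \<theta> \<sigma> 0 x)))" by simp
next
  fix A assume "A \<in> sets (distr (density (lborel \<Otimes>\<^sub>M lborel) (\<lambda>\<omega>. ennreal (Wt r \<omega>))) lborel (Tm \<theta> \<sigma>))"
  then have A[measurable]: "A \<in> sets borel" by simp
  have vm: "(\<lambda>x. ennreal (vg_density r \<theta> \<sigma> 0 x)) \<in> borel_measurable borel"
    unfolding vg_density_def besselK_def set_lebesgue_integral_def by measurable
  have "emeasure (distr (density (lborel \<Otimes>\<^sub>M lborel) (\<lambda>\<omega>. ennreal (Wt r \<omega>))) lborel (Tm \<theta> \<sigma>)) A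
      = (\<integral>\<^sup>+\<omega>. ennreal (Wt r \<omega>) * indicator A (Tm \<theta> \<sigma> \<omega>) \<partial>(lborel \<Otimes>\<^sub>M lborel))"
  proof -
    have pre: "Tm \<theta> \<sigma> -` A \<in> sets (lborel \<Otimes>\<^sub>M lborel)"
      using measurable_sets[OF Tm_meas, of A \<theta> \<sigma>] A by (simp add: space_pair_measure)
    have "emeasure (distr (density (lborel \<Otimes>\<^sub>M lborel) (\<lambda>\<omega>. ennreal (Wt r \<omega>))) lborel (Tm \<theta> \<sigma>)) A
        = emeasure (density (lborel \<Otimes>\<^sub>M lborel) (\<lambda>\<omega>. ennreal (Wt r \<omega>))) (Tm \<theta> \<sigma> -` A)"
      by (subst emeasure_distr) (simp_all add: space_pair_measure)
    also have "\<dots> = (\<integral>\<^sup>+\<omega>. ennreal (Wt r \<omega>) * indicator (Tm \<theta> \<sigma> -` A) \<omega> \<partial>(lborel \<Otimes>\<^sub>M lborel))"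
      by (rule emeasure_density[OF _ pre]) measurable
    finally show ?thesis by (simp add: indicator_vimage)
  qed
  also have "\<dots> = (\<integral>\<^sup>+g. \<integral>\<^sup>+z. ennreal (Wt r (g, z)) * indicator A (Tm \<theta> \<sigma> (g, z)) \<partial>lborel \<partial>lborel)"
    by (rule lborel.nn_integral_fst[symmetric]) measurable
  also have "\<dots> = (\<integral>\<^sup>+g. \<integral>\<^sup>+x. ennreal (kern r \<theta> \<sigma> x g) * indicator A x \<partial>lborel \<partial>lborel)"
    by (intro nn_integral_cong inner_affine[OF r s A])
  also have "\<dots> = (\<integral>\<^sup>+x. \<integral>\<^sup>+g. ennreal (kern r \<theta> \<sigma> x g) * indicator A x \<partial>lborel \<partial>lborel)"
  proof -
    have m: "(\<lambda>(x, g). ennreal (kern r \<theta> \<sigma> x g) * indicator A x) \<in> borel_measurable (lborel \<Otimes>\<^sub>M lborel)"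
      by measurable
    show ?thesis using lborel_pair.Fubini[OF m] by simp
  qed
  also have "\<dots> = (\<integral>\<^sup>+x. (\<integral>\<^sup>+g. ennreal (kern r \<theta> \<sigma> x g) \<partial>lborel) * indicator A x \<partial>lborel)"
    by (intro nn_integral_cong nn_integral_multc) measurable
  also have "\<dots> = (\<integral>\<^sup>+x. ennreal (vg_density r \<theta> \<sigma> 0 x) * indicator A x \<partial>lborel)"
    by (intro nn_integral_cong_AE, use AE_lborel_singleton[of 0] in eventually_elim)
       (simp add: mixture[OF r s])
  also have "\<dots> = emeasure (density lborel (\<lambda>x. ennreal (vg_density r \<theta> \<sigma> 0 x))) A"
    by (subst emeasure_density) (use vm in auto)
  finally show "emeasure (distr (density (lborel \<Otimes>\<^sub>M lborel) (\<lambda>\<omega>. ennreal (Wt r \<omega>))) lborel (Tm \<theta> \<sigma>)) A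
      = emeasure (density lborel (\<lambda>x. ennreal (vg_density r \<theta> \<sigma> 0 x))) A" .
qed

lemma integrable_prod_lborel:
  fixes f h :: "real \<Rightarrow> real"
  assumes f: "integrable lborel f" and h: "integrable lborel h"
  shows "integrable (lborel \<Otimes>\<^sub>M lborel) (\<lambda>\<omega>. f (fst \<omega>) * h (snd \<omega>))"
proof -
  have fm[measurable]: "f \<in> borel_measurable lborel" and hm[measurable]: "h \<in> borel_measurable lborel"
    using f h by auto
  have fm'[measurable]: "f \<in> borel_measurable borel" and hm'[measurable]: "h \<in> borel_measurable borel"
    using fm hm by simp_all
  have "(\<integral>\<^sup>+\<omega>. ennreal (norm (f (fst \<omega>) * h (snd \<omega>))) \<partial>(lborel \<Otimes>\<^sub>M lborel))
      = (\<integral>\<^sup>+x. \<integral>\<^sup>+y. ennreal (norm (f x)) * ennreal (norm (h y)) \<partial>lborel \<partial>lborel)"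
    by (subst lborel.nn_integral_fst[symmetric]) (auto simp: abs_mult ennreal_mult)
  also have "\<dots> = (\<integral>\<^sup>+x. ennreal (norm (f x)) * (\<integral>\<^sup>+y. ennreal (norm (h y)) \<partial>lborel) \<partial>lborel)"
    by (intro nn_integral_cong nn_integral_cmult) auto
  also have "\<dots> = (\<integral>\<^sup>+x. ennreal (norm (f x)) \<partial>lborel) * (\<integral>\<^sup>+y. ennreal (norm (h y)) \<partial>lborel)"
    by (intro nn_integral_multc) auto
  also have "\<dots> < \<infinity>"
    using f h unfolding integrable_iff_bounded by (simp add: ennreal_mult_less_top)
  finally show ?thesis unfolding integrable_iff_bounded by simp
qed

lemma one_plus_pow_le: "0 \<le> (g::real) \<Longrightarrow> (1 + g) ^ m \<le> 2 ^ m * (1 + g ^ m)"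
proof -
  assume g: "0 \<le> g"
  have "(1 + g) ^ m \<le> (2 * max 1 g) ^ m" using g by (intro power_mono) auto
  also have "\<dots> = 2 ^ m * max 1 g ^ m" by (simp add: power_mult_distrib)
  also have "max 1 g ^ m \<le> 1 + g ^ m" using g by (cases "1 \<le> g") (auto simp: max_def)
  then have "2 ^ m * max 1 g ^ m \<le> 2 ^ m * (1 + g ^ m)" by simp
  finally show ?thesis .
qed

lemma integrable_wgt: assumes "0 < s" shows "integrable lborel (wgt s)"
proof (rule integrableI_nonneg)
  show "AE x in lborel. 0 \<le> wgt s x" by (simp add: wgt_nonneg)
  have "(\<integral>\<^sup>+g. ennreal (wgt s g) \<partial>lborel)
      = (\<integral>\<^sup>+g. ennreal (g powr (s / 2 - 1) * exp (- (1/2) * g) * indicator {0<..} g) \<partial>lborel)"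
    by (intro nn_integral_cong) (auto simp: wgt_def)
  also have "\<dots> < \<infinity>" using gamma_nn_finite[of "s/2" "1/2"] assms by simp
  finally show "(\<integral>\<^sup>+g. ennreal (wgt s g) \<partial>lborel) < \<infinity>" .
qed simp

lemma integrable_wgt_pow:
  assumes r: "0 < r" shows "integrable lborel (\<lambda>g. wgt r g * (1 + g) ^ m)"
proof (rule Bochner_Integration.integrable_bound)
  have "integrable lborel (\<lambda>g. wgt r g + wgt (r + 2 * real m) g)"
    using r by (intro Bochner_Integration.integrable_add integrable_wgt) auto
  then show "integrable lborel (\<lambda>g. 2 ^ m * (wgt r g + wgt (r + 2 * real m) g))"
    by (rule integrable_mult_right)
  show "(\<lambda>g. wgt r g * (1 + g) ^ m) \<in> borel_measurable lborel" by simp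
  show "AE g in lborel. norm (wgt r g * (1 + g) ^ m) \<le> norm (2 ^ m * (wgt r g + wgt (r + 2 * real m) g))"
  proof (intro AE_I2)
    fix g :: real
    show "norm (wgt r g * (1 + g) ^ m) \<le> norm (2 ^ m * (wgt r g + wgt (r + 2 * real m) g))"
    proof (cases "0 < g")
      case True
      have w2: "wgt (r + 2 * real m) g = wgt r g * g ^ m"
      proof -
        have "g powr ((r + 2 * real m) / 2 - 1) = g powr ((r / 2 - 1) + real m)"
          by (intro arg_cong[where f="\<lambda>a. g powr a"]) (simp add: field_simps)
        also have "\<dots> = g powr (r / 2 - 1) * g ^ m"
          using True by (simp add: powr_add powr_realpow)
        finally show ?thesis using True by (simp add: wgt_def)
      qed
      have "wgt r g * (1 + g) ^ m \<le> wgt r g * (2 ^ m * (1 + g ^ m))"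
        using True by (intro mult_left_mono one_plus_pow_le wgt_nonneg) auto
      also have "\<dots> = 2 ^ m * (wgt r g + wgt (r + 2 * real m) g)" unfolding w2 by (simp add: algebra_simps)
      finally show ?thesis using True wgt_nonneg[of r g] wgt_nonneg[of "r + 2 * real m" g] by simp
    qed (simp add: wgt_def)
  qed
qed

lemma integrable_gauss_pow: "integrable lborel (\<lambda>z::real. exp (- z\<^sup>2 / 2) * (1 + \<bar>z\<bar>) ^ m)"
proof (rule Bochner_Integration.integrable_bound)
  have "integrable lborel (\<lambda>z. std_normal_density z * \<bar>z\<bar> ^ 0 + std_normal_density z * \<bar>z\<bar> ^ m)"
    by (intro Bochner_Integration.integrable_add integrable_std_normal_moment_abs)
  then show "integrable lborel (\<lambda>z. 2 ^ m * sqrt (2 * pi) * (std_normal_density z * \<bar>z\<bar> ^ 0 + std_normal_density z * \<bar>z\<bar> ^ m))"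
    by (rule integrable_mult_right)
  show "(\<lambda>z::real. exp (- z\<^sup>2 / 2) * (1 + \<bar>z\<bar>) ^ m) \<in> borel_measurable lborel" by simp
  show "AE z in lborel. norm (exp (- z\<^sup>2 / 2) * (1 + \<bar>z\<bar>) ^ m)
      \<le> norm (2 ^ m * sqrt (2 * pi) * (std_normal_density z * \<bar>z\<bar> ^ 0 + std_normal_density z * \<bar>z\<bar> ^ m))"
  proof (intro AE_I2)
    fix z :: real
    have e: "sqrt (2 * pi) * (std_normal_density z * \<bar>z\<bar> ^ 0 + std_normal_density z * \<bar>z\<bar> ^ m)
        = exp (- z\<^sup>2 / 2) * (1 + \<bar>z\<bar> ^ m)"
      by (simp add: std_normal_density_def field_simps)
    have "exp (- z\<^sup>2 / 2) * (1 + \<bar>z\<bar>) ^ m \<le> exp (- z\<^sup>2 / 2) * (2 ^ m * (1 + \<bar>z\<bar> ^ m))"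
      by (intro mult_left_mono one_plus_pow_le) auto
    also have "\<dots> = 2 ^ m * sqrt (2 * pi) * (std_normal_density z * \<bar>z\<bar> ^ 0 + std_normal_density z * \<bar>z\<bar> ^ m)"
      using e by (simp add: mult_ac)
    finally show "norm (exp (- z\<^sup>2 / 2) * (1 + \<bar>z\<bar>) ^ m)
      \<le> norm (2 ^ m * sqrt (2 * pi) * (std_normal_density z * \<bar>z\<bar> ^ 0 + std_normal_density z * \<bar>z\<bar> ^ m))"
      by simp
  qed
qed

lemma integrable_Wt_pow:
  assumes r: "0 < r"
  shows "integrable (lborel \<Otimes>\<^sub>M lborel) (\<lambda>\<omega>. Wt r \<omega> * ((1 + fst \<omega>) ^ m * (1 + \<bar>snd \<omega>\<bar>) ^ m))"
proof -
  have "integrable (lborel \<Otimes>\<^sub>M lborel) (\<lambda>\<omega>. (cst r * (wgt r (fst \<omega>) * (1 + fst \<omega>) ^ m)) * (exp (- (snd \<omega>)\<^sup>2 / 2) * (1 + \<bar>snd \<omega>\<bar>) ^ m))"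
  proof (rule integrable_prod_lborel[where f="\<lambda>g. cst r * (wgt r g * (1 + g) ^ m)"
        and h="\<lambda>z::real. exp (- z\<^sup>2 / 2) * (1 + \<bar>z\<bar>) ^ m"])
    show "integrable lborel (\<lambda>g. cst r * (wgt r g * (1 + g) ^ m))"
      using integrable_wgt_pow[OF r] by (rule integrable_mult_right)
    show "integrable lborel (\<lambda>z::real. exp (- z\<^sup>2 / 2) * (1 + \<bar>z\<bar>) ^ m)"
      by (rule integrable_gauss_pow)
  qed
  then show ?thesis by (simp add: Wt_def mult_ac)
qed

lemma integrable_Wt_bound:
  assumes r: "0 < r" and f[measurable]: "f \<in> borel_measurable (lborel \<Otimes>\<^sub>M lborel)"
    and K: "0 \<le> K"
    and b: "\<And>g z. 0 < g \<Longrightarrow> \<bar>f (g, z)\<bar> \<le> K * ((1 + g) ^ m * (1 + \<bar>z\<bar>) ^ m)"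
  shows "integrable (lborel \<Otimes>\<^sub>M lborel) (\<lambda>\<omega>. Wt r \<omega> * f \<omega>)"
proof (rule Bochner_Integration.integrable_bound)
  show "integrable (lborel \<Otimes>\<^sub>M lborel) (\<lambda>\<omega>. K * (Wt r \<omega> * ((1 + fst \<omega>) ^ m * (1 + \<bar>snd \<omega>\<bar>) ^ m)))"
    by (intro integrable_mult_right integrable_Wt_pow[OF r])
  show "(\<lambda>\<omega>. Wt r \<omega> * f \<omega>) \<in> borel_measurable (lborel \<Otimes>\<^sub>M lborel)" by measurable
  show "AE \<omega> in lborel \<Otimes>\<^sub>M lborel. norm (Wt r \<omega> * f \<omega>) \<le> norm (K * (Wt r \<omega> * ((1 + fst \<omega>) ^ m * (1 + \<bar>snd \<omega>\<bar>) ^ m)))"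
  proof (intro AE_I2)
    fix \<omega> :: "real \<times> real"
    obtain g z where \<omega>: "\<omega> = (g, z)" by fastforce
    show "norm (Wt r \<omega> * f \<omega>) \<le> norm (K * (Wt r \<omega> * ((1 + fst \<omega>) ^ m * (1 + \<bar>snd \<omega>\<bar>) ^ m)))"
    proof (cases "0 < g")
      case True
      have W: "0 \<le> Wt r \<omega>" by (rule Wt_nonneg[OF r])
      have "norm (Wt r \<omega> * f \<omega>) = Wt r \<omega> * \<bar>f (g, z)\<bar>" using W \<omega> by (simp add: abs_mult)
      also have "\<dots> \<le> Wt r \<omega> * (K * ((1 + g) ^ m * (1 + \<bar>z\<bar>) ^ m))"
        by (intro mult_left_mono b True W)
      also have "\<dots> \<le> norm (K * (Wt r \<omega> * ((1 + fst \<omega>) ^ m * (1 + \<bar>snd \<omega>\<bar>) ^ m)))"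
        using \<omega> by (simp add: mult_ac)
      finally show ?thesis .
    next
      case False
      then show ?thesis using \<omega> by (simp add: Wt_def wgt_def)
    qed
  qed
qed

lemma lin_bound:
  fixes \<alpha> \<gamma> z :: real
  shows "\<bar>\<alpha> + \<gamma> * z\<bar> \<le> (1 + \<bar>\<alpha>\<bar> + \<bar>\<gamma>\<bar>) * (1 + \<bar>z\<bar>)"
proof -
  have "\<bar>\<alpha> + \<gamma> * z\<bar> \<le> \<bar>\<alpha>\<bar> + \<bar>\<gamma>\<bar> * \<bar>z\<bar>" by (simp add: abs_mult abs_triangle_ineq order_trans[OF abs_triangle_ineq])
  also have "\<dots> \<le> (1 + \<bar>\<alpha>\<bar> + \<bar>\<gamma>\<bar>) * (1 + \<bar>z\<bar>)" by (simp add: algebra_simps)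
  finally show ?thesis .
qed

lemma d_gauss: "((\<lambda>z::real. exp (- z\<^sup>2 / 2)) has_real_derivative (- x * exp (- x\<^sup>2 / 2))) (at x)"
proof -
  have e: "(\<lambda>z::real. exp (- z\<^sup>2 / 2)) = (\<lambda>z. exp (- (1/2) * z\<^sup>2))" by (simp add: field_simps)
  show ?thesis unfolding e
    by (auto intro!: derivative_eq_intros simp: power2_eq_square field_simps)
qed

lemma gauss_ibp:
  fixes \<alpha> \<gamma> :: real and j :: nat
  shows "(\<integral>z. exp (- z\<^sup>2 / 2) * (z * (\<alpha> + \<gamma> * z) ^ j - \<gamma> * real j * (\<alpha> + \<gamma> * z) ^ (j - 1)) \<partial>lborel) = 0"
proof -
  define f where "f z = exp (- z\<^sup>2 / 2) * (z * (\<alpha> + \<gamma> * z) ^ j - \<gamma> * real j * (\<alpha> + \<gamma> * z) ^ (j - 1))" for z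
  define F where "F z = - exp (- z\<^sup>2 / 2) * (\<alpha> + \<gamma> * z) ^ j" for z
  define L where "L = 1 + \<bar>\<alpha>\<bar> + \<bar>\<gamma>\<bar>"
  have L: "1 \<le> L" by (simp add: L_def)
  have lb: "\<bar>\<alpha> + \<gamma> * z\<bar> \<le> L * (1 + \<bar>z\<bar>)" for z unfolding L_def by (rule lin_bound)
  have pb: "\<bar>\<alpha> + \<gamma> * z\<bar> ^ k \<le> L ^ k * (1 + \<bar>z\<bar>) ^ k" for z k
    using power_mono[OF lb[of z], of k] by (simp add: power_mult_distrib)
  have deriv: "(F has_vector_derivative f x) (at x)" for x
    unfolding has_real_derivative_iff_has_vector_derivative[symmetric] F_def f_def
    by (auto intro!: derivative_eq_intros d_gauss simp: algebra_simps)
  have cont: "isCont f x" for x unfolding f_def by (intro continuous_intros; simp)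
  have integ: "integrable lborel f"
  proof (rule Bochner_Integration.integrable_bound)
    show "integrable lborel (\<lambda>z. ((1 + \<bar>\<gamma>\<bar> * real j) * L ^ j) * (exp (- z\<^sup>2 / 2) * (1 + \<bar>z\<bar>) ^ (j + 1)))"
      by (intro integrable_mult_right integrable_gauss_pow)
    show "f \<in> borel_measurable lborel" unfolding f_def by measurable
    show "AE z in lborel. norm (f z) \<le> norm ((1 + \<bar>\<gamma>\<bar> * real j) * L ^ j * (exp (- z\<^sup>2 / 2) * (1 + \<bar>z\<bar>) ^ (j + 1)))"
    proof (intro AE_I2)
      fix z :: real
      have z1: "1 \<le> 1 + \<bar>z\<bar>" by simp
      have t1: "\<bar>z * (\<alpha> + \<gamma> * z) ^ j\<bar> \<le> L ^ j * (1 + \<bar>z\<bar>) ^ (j + 1)"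
      proof -
        have "\<bar>z * (\<alpha> + \<gamma> * z) ^ j\<bar> = \<bar>z\<bar> * \<bar>\<alpha> + \<gamma> * z\<bar> ^ j" by (simp add: abs_mult power_abs)
        also have "\<dots> \<le> (1 + \<bar>z\<bar>) * (L ^ j * (1 + \<bar>z\<bar>) ^ j)"
          by (intro mult_mono pb) auto
        finally show ?thesis by (simp add: algebra_simps)
      qed
      have t2: "\<bar>\<gamma> * real j * (\<alpha> + \<gamma> * z) ^ (j - 1)\<bar> \<le> \<bar>\<gamma>\<bar> * real j * (L ^ j * (1 + \<bar>z\<bar>) ^ (j + 1))"
      proof -
        have "\<bar>\<gamma> * real j * (\<alpha> + \<gamma> * z) ^ (j - 1)\<bar> = \<bar>\<gamma>\<bar> * real j * \<bar>\<alpha> + \<gamma> * z\<bar> ^ (j - 1)"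
          by (simp add: abs_mult power_abs)
        also have "\<dots> \<le> \<bar>\<gamma>\<bar> * real j * (L ^ (j - 1) * (1 + \<bar>z\<bar>) ^ (j - 1))"
          by (intro mult_left_mono pb) auto
        also have "\<dots> \<le> \<bar>\<gamma>\<bar> * real j * (L ^ j * (1 + \<bar>z\<bar>) ^ (j + 1))"
          using L by (intro mult_left_mono mult_mono power_increasing) auto
        finally show ?thesis .
      qed
      have "norm (f z) \<le> exp (- z\<^sup>2 / 2) * (L ^ j * (1 + \<bar>z\<bar>) ^ (j + 1) + \<bar>\<gamma>\<bar> * real j * (L ^ j * (1 + \<bar>z\<bar>) ^ (j + 1)))"
      proof -
        have tri: "\<bar>z * (\<alpha> + \<gamma> * z) ^ j - \<gamma> * real j * (\<alpha> + \<gamma> * z) ^ (j - 1)\<bar>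
            \<le> L ^ j * (1 + \<bar>z\<bar>) ^ (j + 1) + \<bar>\<gamma>\<bar> * real j * (L ^ j * (1 + \<bar>z\<bar>) ^ (j + 1))"
          using abs_triangle_ineq4[of "z * (\<alpha> + \<gamma> * z) ^ j" "\<gamma> * real j * (\<alpha> + \<gamma> * z) ^ (j - 1)"] t1 t2
          by linarith
        show ?thesis unfolding f_def using tri by (simp add: abs_mult)
      qed
      also have "\<dots> = norm ((1 + \<bar>\<gamma>\<bar> * real j) * L ^ j * (exp (- z\<^sup>2 / 2) * (1 + \<bar>z\<bar>) ^ (j + 1)))"
        using L by (simp add: algebra_simps abs_mult)
      finally show "norm (f z) \<le> norm ((1 + \<bar>\<gamma>\<bar> * real j) * L ^ j * (exp (- z\<^sup>2 / 2) * (1 + \<bar>z\<bar>) ^ (j + 1)))" .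
    qed
  qed
  have Fb: "\<bar>F z\<bar> \<le> L ^ j * ((1 + \<bar>z\<bar>) ^ j * exp (- z\<^sup>2 / 2))" for z
    unfolding F_def using pb[of z j] by (simp add: abs_mult power_abs mult_ac)
  have lim_top: "(F \<longlongrightarrow> 0) at_top"
  proof (rule Lim_null_comparison)
    show "eventually (\<lambda>z. norm (F z) \<le> L ^ j * ((1 + z) ^ j * exp (- z\<^sup>2 / 2))) at_top"
      using eventually_ge_at_top[of 0]
    proof eventually_elim
      case (elim z) then show ?case using Fb[of z] by simp
    qed
    have "((\<lambda>z::real. (1 + z) ^ j * exp (- z\<^sup>2 / 2)) \<longlongrightarrow> 0) at_top" by real_asymp
    then show "((\<lambda>z. L ^ j * ((1 + z) ^ j * exp (- z\<^sup>2 / 2))) \<longlongrightarrow> 0) at_top"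
      by (intro tendsto_mult_right_zero)
  qed
  have lim_bot: "(F \<longlongrightarrow> 0) at_bot"
  proof (rule Lim_null_comparison)
    show "eventually (\<lambda>z. norm (F z) \<le> L ^ j * ((1 - z) ^ j * exp (- z\<^sup>2 / 2))) at_bot"
      using eventually_le_at_bot[of 0]
    proof eventually_elim
      case (elim z) then show ?case using Fb[of z] by simp
    qed
    have "((\<lambda>z::real. (1 - z) ^ j * exp (- z\<^sup>2 / 2)) \<longlongrightarrow> 0) at_bot" by real_asymp
    then show "((\<lambda>z. L ^ j * ((1 - z) ^ j * exp (- z\<^sup>2 / 2))) \<longlongrightarrow> 0) at_bot"
      by (intro tendsto_mult_right_zero)
  qed
  have "(LBINT x=-\<infinity>..\<infinity>. f x) = 0 - 0"
    by (rule interval_integral_FTC_integrable[where F=F])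
       (use deriv cont integ lim_top lim_bot in \<open>auto simp: ereal_tendsto_simps set_integrable_def\<close>)
  then show ?thesis
    by (simp add: interval_lebesgue_integral_def set_lebesgue_integral_def f_def)
qed

lemma gamma_deriv:
  fixes r \<theta> \<sigma> c z g :: real and j :: nat
  assumes g: "0 < g"
  shows "((\<lambda>g. - 2 * ((g powr (r/2) * exp (- g / 2)) * (\<theta> * g + \<sigma> * sqrt g * z - c) ^ j)) has_real_derivative
    (wgt r g * ((g - r) * (\<theta> * g + \<sigma> * sqrt g * z - c) ^ j - real j * (\<theta> * g + \<sigma> * sqrt g * z - c) ^ (j - 1) * (2 * \<theta> * g + \<sigma> * sqrt g * z)))) (at g)"
proof -
  define H where "H x = \<theta> * x + \<sigma> * sqrt x * z - c" for x
  have d1: "((\<lambda>x. x powr (r/2)) has_real_derivative (r/2) * g powr (r/2 - 1)) (at g)"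
    by (rule has_real_derivative_powr[OF g])
  have d2: "((\<lambda>x. exp (- x / 2)) has_real_derivative (- exp (- g / 2) / 2)) (at g)"
  proof -
    have e: "(\<lambda>x::real. exp (- x / 2)) = (\<lambda>x. exp (- (1/2) * x))" by (simp add: field_simps)
    show ?thesis unfolding e by (auto intro!: derivative_eq_intros simp: field_simps)
  qed
  have d3: "((\<lambda>x. H x ^ j) has_real_derivative real j * H g ^ (j - 1) * (\<theta> + \<sigma> * z * (inverse (sqrt g) / 2))) (at g)"
    unfolding H_def using g by (auto intro!: derivative_eq_intros simp: algebra_simps)
  have d: "((\<lambda>x. - 2 * ((x powr (r/2) * exp (- x / 2)) * H x ^ j)) has_real_derivative
      - 2 * (((r/2) * g powr (r/2 - 1) * exp (- g / 2) + (- exp (- g / 2) / 2) * g powr (r/2)) * H g ^ j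
        + (real j * H g ^ (j - 1) * (\<theta> + \<sigma> * z * (inverse (sqrt g) / 2))) * (g powr (r/2) * exp (- g / 2)))) (at g)"
    by (rule DERIV_cmult[OF DERIV_mult[OF DERIV_mult[OF d1 d2] d3]])
  obtain s where s: "0 < s" "g = s * s" "sqrt g = s"
    using g by (intro that[of "sqrt g"]) (auto simp: real_sqrt_mult_self)
  define p where "p = g powr (r/2 - 1)"
  have pg: "g powr (r/2) = p * g"
  proof -
    have "p * g = g powr (r/2 - 1) * g powr 1" using g by (simp add: p_def)
    also have "\<dots> = g powr (r/2 - 1 + 1)" by (rule powr_add[symmetric])
    finally show ?thesis by simp
  qed
  have w: "wgt r g = p * exp (- g / 2)" using g by (simp add: wgt_def p_def)
  have eq: "- 2 * (((r/2) * g powr (r/2 - 1) * exp (- g / 2) + (- exp (- g / 2) / 2) * g powr (r/2)) * H g ^ j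
        + (real j * H g ^ (j - 1) * (\<theta> + \<sigma> * z * (inverse (sqrt g) / 2))) * (g powr (r/2) * exp (- g / 2)))
      = wgt r g * ((g - r) * H g ^ j - real j * H g ^ (j - 1) * (2 * \<theta> * g + \<sigma> * sqrt g * z))"
  proof -
    have "g * (\<theta> + \<sigma> * z * (inverse (sqrt g) / 2)) = (2 * \<theta> * g + \<sigma> * sqrt g * z) / 2"
      using s by (simp add: field_simps)
    moreover have gi: "g * inverse (sqrt g) = sqrt g" using s by simp
    ultimately show ?thesis unfolding pg w p_def[symmetric] by (simp add: algebra_simps gi)
  qed
  have d': "((\<lambda>x. - 2 * ((x powr (r/2) * exp (- x / 2)) * H x ^ j)) has_real_derivative
      wgt r g * ((g - r) * H g ^ j - real j * H g ^ (j - 1) * (2 * \<theta> * g + \<sigma> * sqrt g * z))) (at g)"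
    using d by (simp only: eq)
  show ?thesis using d' unfolding H_def .
qed

lemma H_bound:
  fixes \<theta> \<sigma> c z g :: real assumes g: "0 \<le> g"
  shows "\<bar>\<theta> * g + \<sigma> * sqrt g * z - c\<bar> \<le> (1 + \<bar>\<theta>\<bar> + \<bar>\<sigma> * z\<bar> + \<bar>c\<bar>) * (1 + g)"
proof -
  have sg: "sqrt g \<le> 1 + g"
  proof -
    have "g \<le> (1 + g)\<^sup>2" using g by (simp add: power2_eq_square algebra_simps)
    then have "sqrt g \<le> sqrt ((1 + g)\<^sup>2)" by (rule real_sqrt_le_mono)
    then show ?thesis using g by simp
  qed
  have "\<bar>\<theta> * g + \<sigma> * sqrt g * z - c\<bar> \<le> \<bar>\<theta>\<bar> * g + \<bar>\<sigma> * z\<bar> * sqrt g + \<bar>c\<bar>"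
  proof -
    have 1: "\<bar>\<theta> * g + \<sigma> * sqrt g * z - c\<bar> \<le> \<bar>\<theta> * g\<bar> + \<bar>\<sigma> * sqrt g * z\<bar> + \<bar>c\<bar>"
      using abs_triangle_ineq4[of "\<theta> * g + \<sigma> * sqrt g * z" c] abs_triangle_ineq[of "\<theta> * g" "\<sigma> * sqrt g * z"]
      by linarith
    have 2: "\<bar>\<theta> * g\<bar> = \<bar>\<theta>\<bar> * g" "\<bar>\<sigma> * sqrt g * z\<bar> = \<bar>\<sigma> * z\<bar> * sqrt g"
      using g by (simp_all add: abs_mult)
    show ?thesis using 1 unfolding 2 .
  qed
  also have "\<dots> \<le> \<bar>\<theta>\<bar> * (1 + g) + \<bar>\<sigma> * z\<bar> * (1 + g) + \<bar>c\<bar> * (1 + g)"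
    using g sg by (intro add_mono mult_left_mono) (auto simp: algebra_simps)
  also have "\<dots> \<le> (1 + \<bar>\<theta>\<bar> + \<bar>\<sigma> * z\<bar> + \<bar>c\<bar>) * (1 + g)"
    using g by (simp add: algebra_simps)
  finally show ?thesis .
qed

lemma rearr2: "(w::real) * ((1 + r) * (Lj * P) + (2 * rj * L) * (Lj * P)) = (Lj * (1 + r + 2 * rj * L)) * (w * P)"
  by (simp add: algebra_simps)

lemma gamma_ibp:
  fixes r \<theta> \<sigma> c z :: real and j :: nat
  assumes r: "0 < r"
  shows "(\<integral>g. wgt r g * ((g - r) * (\<theta> * g + \<sigma> * sqrt g * z - c) ^ j
            - real j * (\<theta> * g + \<sigma> * sqrt g * z - c) ^ (j - 1) * (2 * \<theta> * g + \<sigma> * sqrt g * z)) \<partial>lborel) = 0"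
proof -
  define H where "H g = \<theta> * g + \<sigma> * sqrt g * z - c" for g
  define f where "f g = wgt r g * ((g - r) * H g ^ j - real j * H g ^ (j - 1) * (2 * \<theta> * g + \<sigma> * sqrt g * z))" for g
  define F where "F g = - 2 * ((g powr (r/2) * exp (- g / 2)) * H g ^ j)" for g
  define L where "L = 1 + \<bar>\<theta>\<bar> + \<bar>\<sigma> * z\<bar> + \<bar>c\<bar>"
  have L: "1 \<le> L" by (simp add: L_def)
  have Hb: "\<bar>H g\<bar> \<le> L * (1 + g)" if "0 \<le> g" for g
    unfolding H_def L_def using H_bound[OF that] .
  have Hpb: "\<bar>H g\<bar> ^ k \<le> L ^ k * (1 + g) ^ k" if "0 \<le> g" for g k
    using power_mono[OF Hb[OF that], of k] that by (simp add: power_mult_distrib)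
  have fm[measurable]: "f \<in> borel_measurable borel" unfolding f_def H_def by measurable
  have integ: "integrable lborel f"
  proof (rule Bochner_Integration.integrable_bound)
    show "integrable lborel (\<lambda>g. (L ^ j * (1 + r + 2 * real j * L)) * (wgt r g * (1 + g) ^ (j + 1)))"
      by (intro integrable_mult_right integrable_wgt_pow[OF r])
    show "f \<in> borel_measurable lborel" by simp
    show "AE g in lborel. norm (f g) \<le> norm ((L ^ j * (1 + r + 2 * real j * L)) * (wgt r g * (1 + g) ^ (j + 1)))"
    proof (intro AE_I2)
      fix g :: real
      show "norm (f g) \<le> norm ((L ^ j * (1 + r + 2 * real j * L)) * (wgt r g * (1 + g) ^ (j + 1)))"
      proof (cases "0 < g")
        case True
        then have g0: "0 \<le> g" by simp
        have b1: "\<bar>(g - r) * H g ^ j\<bar> \<le> (1 + r) * (L ^ j * (1 + g) ^ (j + 1))"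
        proof -
          have "\<bar>(g - r) * H g ^ j\<bar> = \<bar>g - r\<bar> * \<bar>H g\<bar> ^ j" by (simp add: abs_mult power_abs)
          also have "\<dots> \<le> ((1 + r) * (1 + g)) * (L ^ j * (1 + g) ^ j)"
          proof (intro mult_mono Hpb)
            show "\<bar>g - r\<bar> \<le> (1 + r) * (1 + g)"
              using r g0 mult_nonneg_nonneg[of r g] by (auto simp: algebra_simps abs_if)
          qed (use r g0 in auto)
          also have "\<dots> = (1 + r) * (L ^ j * (1 + g) ^ (j + 1))" by (simp add: mult_ac)
          finally show ?thesis .
        qed
        have b2: "\<bar>real j * H g ^ (j - 1) * (2 * \<theta> * g + \<sigma> * sqrt g * z)\<bar> \<le> (2 * real j * L) * (L ^ j * (1 + g) ^ (j + 1))"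
        proof -
          have q: "\<bar>2 * \<theta> * g + \<sigma> * sqrt g * z\<bar> \<le> 2 * L * (1 + g)"
          proof -
            have "\<bar>2 * \<theta> * g + \<sigma> * sqrt g * z\<bar> = \<bar>H g + \<theta> * g + c\<bar>" by (simp add: H_def)
            also have "\<dots> \<le> \<bar>H g\<bar> + \<bar>\<theta>\<bar> * g + \<bar>c\<bar>"
              using g0 abs_triangle_ineq[of "H g + \<theta> * g" c] abs_triangle_ineq[of "H g" "\<theta> * g"]
              by (simp add: abs_mult)
            also have "\<dots> \<le> L * (1 + g) + L * (1 + g)"
            proof -
              have "\<bar>\<theta>\<bar> * g + \<bar>c\<bar> \<le> L * (1 + g)"
                unfolding L_def using g0 mult_nonneg_nonneg[of "\<bar>\<sigma> * z\<bar>" g] mult_nonneg_nonneg[of "\<bar>c\<bar>" g]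
                by (simp add: algebra_simps)
              then show ?thesis using Hb[OF g0] by linarith
            qed
            finally show ?thesis by simp
          qed
          have "\<bar>real j * H g ^ (j - 1) * (2 * \<theta> * g + \<sigma> * sqrt g * z)\<bar>
              = real j * \<bar>H g\<bar> ^ (j - 1) * \<bar>2 * \<theta> * g + \<sigma> * sqrt g * z\<bar>" by (simp add: abs_mult power_abs)
          also have "\<dots> \<le> real j * (L ^ (j - 1) * (1 + g) ^ (j - 1)) * (2 * L * (1 + g))"
            using g0 L by (intro mult_mono Hpb q mult_left_mono) auto
          also have "\<dots> \<le> real j * (L ^ j * (1 + g) ^ j) * (2 * L * (1 + g))"
          proof -
            have "L ^ (j - 1) * (1 + g) ^ (j - 1) \<le> L ^ j * (1 + g) ^ j"
              using L g0 by (intro mult_mono power_increasing) auto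
            then have "real j * (L ^ (j - 1) * (1 + g) ^ (j - 1)) \<le> real j * (L ^ j * (1 + g) ^ j)"
              by (intro mult_left_mono) auto
            moreover have "0 \<le> 2 * L * (1 + g)" using L g0 by simp
            ultimately show ?thesis by (rule mult_right_mono)
          qed
          also have "\<dots> = (2 * real j * L) * (L ^ j * (1 + g) ^ (j + 1))" by (simp add: mult_ac)
          finally show ?thesis .
        qed
        have w: "0 \<le> wgt r g" by (rule wgt_nonneg)
        have "norm (f g) = wgt r g * \<bar>(g - r) * H g ^ j - real j * H g ^ (j - 1) * (2 * \<theta> * g + \<sigma> * sqrt g * z)\<bar>"
          using w by (simp add: f_def abs_mult)
        also have "\<dots> \<le> wgt r g * ((1 + r) * (L ^ j * (1 + g) ^ (j + 1)) + (2 * real j * L) * (L ^ j * (1 + g) ^ (j + 1)))"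
          using b1 b2 abs_triangle_ineq4[of "(g - r) * H g ^ j" "real j * H g ^ (j - 1) * (2 * \<theta> * g + \<sigma> * sqrt g * z)"]
          by (intro mult_left_mono w) linarith
        also have "\<dots> = norm ((L ^ j * (1 + r + 2 * real j * L)) * (wgt r g * (1 + g) ^ (j + 1)))"
        proof -
          have nn: "0 \<le> (L ^ j * (1 + r + 2 * real j * L)) * (wgt r g * (1 + g) ^ (j + 1))"
            using w r L g0 by simp
          have "wgt r g * ((1 + r) * (L ^ j * (1 + g) ^ (j + 1)) + (2 * real j * L) * (L ^ j * (1 + g) ^ (j + 1)))
              = (L ^ j * (1 + r + 2 * real j * L)) * (wgt r g * (1 + g) ^ (j + 1))"
            using rearr2 by blast
          then show ?thesis using nn by simp
        qed
        finally show ?thesis .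
      qed (simp add: f_def wgt_def)
    qed
  qed
  have deriv: "(F has_vector_derivative f x) (at x)" if "ereal 0 < ereal x" for x
  proof -
    have "0 < x" using that by simp
    then show ?thesis unfolding has_real_derivative_iff_has_vector_derivative[symmetric] F_def f_def H_def
      by (rule gamma_deriv)
  qed
  have cont: "isCont f x" if "ereal 0 < ereal x" for x
  proof -
    have x: "0 < x" using that by simp
    have ev: "eventually (\<lambda>y. y \<in> {0<..}) (nhds x)" using x by (intro eventually_nhds_in_open) auto
    have e: "eventually (\<lambda>y. f y = y powr (r / 2 - 1) * exp (- y / 2) * ((y - r) * H y ^ j - real j * H y ^ (j - 1) * (2 * \<theta> * y + \<sigma> * sqrt y * z))) (nhds x)"
      using ev by eventually_elim (simp add: f_def wgt_def)
    have c: "isCont (\<lambda>y. y powr (r / 2 - 1) * exp (- y / 2) * ((y - r) * H y ^ j - real j * H y ^ (j - 1) * (2 * \<theta> * y + \<sigma> * sqrt y * z))) x"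
      unfolding H_def using x by (intro continuous_intros; simp)
    show ?thesis using isCont_cong[OF e] c by simp
  qed
  have lim0: "(F \<longlongrightarrow> 0) (at_right 0)"
  proof -
    have p: "((\<lambda>g. g powr (r/2)) \<longlongrightarrow> 0) (at_right 0)"
    proof (rule tendsto_zero_powrI[where b="r/2"])
      show "((\<lambda>g::real. g) \<longlongrightarrow> 0) (at_right 0)" by (rule tendsto_ident_at)
      show "((\<lambda>g::real. r / 2) \<longlongrightarrow> r / 2) (at_right 0)" by (rule tendsto_const)
      show "\<forall>\<^sub>F g in at_right 0. 0 \<le> (g::real)" by (rule eventually_at_rightI[of 0 1]) auto
      show "0 < r / 2" using r by simp
    qed
    have "(F \<longlongrightarrow> - 2 * ((0 * exp (- 0 / 2)) * H 0 ^ j)) (at_right 0)"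
      unfolding F_def H_def by (intro tendsto_intros p tendsto_ident_at) auto
    then show ?thesis by simp
  qed
  have limT: "(F \<longlongrightarrow> 0) at_top"
  proof (rule Lim_null_comparison)
    show "eventually (\<lambda>g. norm (F g) \<le> (2 * L ^ j) * (g powr (r/2) * exp (- g / 2) * (1 + g) ^ j)) at_top"
      using eventually_ge_at_top[of 0]
    proof eventually_elim
      case (elim g)
      have "norm (F g) = 2 * (g powr (r/2) * exp (- g / 2)) * \<bar>H g\<bar> ^ j"
        by (simp add: F_def abs_mult power_abs)
      also have "\<dots> \<le> 2 * (g powr (r/2) * exp (- g / 2)) * (L ^ j * (1 + g) ^ j)"
        using elim by (intro mult_left_mono Hpb) auto
      finally show ?case by (simp add: mult_ac)
    qed
    have "((\<lambda>g::real. g powr (r/2) * exp (- g / 2) * (1 + g) ^ j) \<longlongrightarrow> 0) at_top" by real_asymp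
    then show "((\<lambda>g. (2 * L ^ j) * (g powr (r/2) * exp (- g / 2) * (1 + g) ^ j)) \<longlongrightarrow> 0) at_top"
      by (intro tendsto_mult_right_zero)
  qed
  have si: "set_integrable lborel (einterval (ereal 0) \<infinity>) f"
    unfolding set_integrable_def by (rule integrable_mult_indicator) (use integ in auto)
  have "(LBINT x=ereal 0..\<infinity>. f x) = 0 - 0"
    by (rule interval_integral_FTC_integrable[where F=F])
       (use deriv cont si lim0 limT in \<open>auto simp: ereal_tendsto_simps\<close>)
  moreover have "(LBINT x=ereal 0..\<infinity>. f x) = (\<integral>g. f g \<partial>lborel)"
    unfolding interval_integral_to_infinity_eq set_lebesgue_integral_def
    by (intro Bochner_Integration.integral_cong) (auto simp: f_def wgt_def indicator_def)
  ultimately show ?thesis by (simp add: f_def H_def)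
qed

lemma T_bound:
  fixes \<theta> \<sigma> c z g :: real assumes g: "0 \<le> g"
  shows "\<bar>\<theta> * g + \<sigma> * sqrt g * z - c\<bar> \<le> (1 + \<bar>\<theta>\<bar> + \<bar>\<sigma>\<bar> + \<bar>c\<bar>) * ((1 + g) * (1 + \<bar>z\<bar>))"
proof -
  have "\<bar>\<theta> * g + \<sigma> * sqrt g * z - c\<bar> \<le> (1 + \<bar>\<theta>\<bar> + \<bar>\<sigma> * z\<bar> + \<bar>c\<bar>) * (1 + g)"
    by (rule H_bound[OF g])
  also have "\<dots> \<le> ((1 + \<bar>\<theta>\<bar> + \<bar>\<sigma>\<bar> + \<bar>c\<bar>) * (1 + \<bar>z\<bar>)) * (1 + g)"
  proof (intro mult_right_mono)
    have "\<bar>\<sigma> * z\<bar> = \<bar>\<sigma>\<bar> * \<bar>z\<bar>" by (simp add: abs_mult)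
    then show "1 + \<bar>\<theta>\<bar> + \<bar>\<sigma> * z\<bar> + \<bar>c\<bar> \<le> (1 + \<bar>\<theta>\<bar> + \<bar>\<sigma>\<bar> + \<bar>c\<bar>) * (1 + \<bar>z\<bar>)"
      using mult_nonneg_nonneg[of "1 + \<bar>\<theta>\<bar> + \<bar>c\<bar>" "\<bar>z\<bar>"] by (simp add: algebra_simps)
  qed (use g in simp)
  finally show ?thesis by (simp add: mult_ac)
qed

lemma integrable_P_T:
  assumes r: "0 < r" and P[measurable]: "P \<in> borel_measurable (lborel \<Otimes>\<^sub>M lborel)"
    and Pb: "\<And>g z. 0 < g \<Longrightarrow> \<bar>P (g, z)\<bar> \<le> (1 + g) * (1 + \<bar>z\<bar>)"
  shows "integrable (lborel \<Otimes>\<^sub>M lborel) (\<lambda>\<omega>. Wt r \<omega> * (P \<omega> * (Tm \<theta> \<sigma> \<omega> - c) ^ j))"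
proof (rule integrable_Wt_bound[OF r _ _, where K="(1 + \<bar>\<theta>\<bar> + \<bar>\<sigma>\<bar> + \<bar>c\<bar>) ^ j" and m="j + 1"])
  show "(\<lambda>\<omega>. P \<omega> * (Tm \<theta> \<sigma> \<omega> - c) ^ j) \<in> borel_measurable (lborel \<Otimes>\<^sub>M lborel)" by measurable
  show "0 \<le> (1 + \<bar>\<theta>\<bar> + \<bar>\<sigma>\<bar> + \<bar>c\<bar>) ^ j" by simp
  fix g z :: real assume g: "0 < g"
  define M where "M = 1 + \<bar>\<theta>\<bar> + \<bar>\<sigma>\<bar> + \<bar>c\<bar>"
  have M: "0 \<le> M" by (simp add: M_def)
  have q: "0 \<le> (1 + g) * (1 + \<bar>z\<bar>)" using g by simp
  have tb: "\<bar>Tm \<theta> \<sigma> (g, z) - c\<bar> \<le> M * ((1 + g) * (1 + \<bar>z\<bar>))"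
    unfolding Tm_def M_def using T_bound[of g] g by simp
  have "\<bar>P (g, z) * (Tm \<theta> \<sigma> (g, z) - c) ^ j\<bar> = \<bar>P (g, z)\<bar> * \<bar>Tm \<theta> \<sigma> (g, z) - c\<bar> ^ j"
    by (simp add: abs_mult power_abs)
  also have "\<dots> \<le> ((1 + g) * (1 + \<bar>z\<bar>)) * (M * ((1 + g) * (1 + \<bar>z\<bar>))) ^ j"
    using g tb by (intro mult_mono Pb power_mono) auto
  also have "\<dots> = M ^ j * ((1 + g) ^ (j + 1) * (1 + \<bar>z\<bar>) ^ (j + 1))"
    by (simp add: power_mult_distrib mult_ac)
  finally show "\<bar>P (g, z) * (Tm \<theta> \<sigma> (g, z) - c) ^ j\<bar> \<le> (1 + \<bar>\<theta>\<bar> + \<bar>\<sigma>\<bar> + \<bar>c\<bar>) ^ j * ((1 + g) ^ (j + 1) * (1 + \<bar>z\<bar>) ^ (j + 1))"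
    unfolding M_def .
qed

lemma sqrt_le_1p: "0 \<le> (g::real) \<Longrightarrow> sqrt g \<le> 1 + g"
proof -
  assume g: "0 \<le> g"
  have "g \<le> (1 + g)\<^sup>2" using g by (simp add: power2_eq_square algebra_simps)
  then have "sqrt g \<le> sqrt ((1 + g)\<^sup>2)" by (rule real_sqrt_le_mono)
  then show ?thesis using g by simp
qed

lemma int_a: assumes r: "0 < r" shows "integrable (lborel \<Otimes>\<^sub>M lborel) (\<lambda>\<omega>. Wt r \<omega> * (Tm \<theta> \<sigma> \<omega> - c) ^ j)"
proof -
  have "integrable (lborel \<Otimes>\<^sub>M lborel) (\<lambda>\<omega>. Wt r \<omega> * ((\<lambda>_. 1) \<omega> * (Tm \<theta> \<sigma> \<omega> - c) ^ j))"
  proof (rule integrable_P_T[OF r])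
    fix g z :: real assume g: "0 < g"
    have "1 \<le> (1 + g) * (1 + \<bar>z\<bar>)" using g mult_nonneg_nonneg[of g "\<bar>z\<bar>"] by (simp add: algebra_simps)
    then show "\<bar>(\<lambda>_. 1::real) (g, z)\<bar> \<le> (1 + g) * (1 + \<bar>z\<bar>)" by simp
  qed auto
  then show ?thesis by simp
qed

lemma int_b: "0 < r \<Longrightarrow> integrable (lborel \<Otimes>\<^sub>M lborel) (\<lambda>\<omega>. Wt r \<omega> * (fst \<omega> * (Tm \<theta> \<sigma> \<omega> - c) ^ j))"
proof (rule integrable_P_T)
  fix g z :: real assume g: "0 < g"
  have "g \<le> (1 + g) * (1 + \<bar>z\<bar>)" using g mult_nonneg_nonneg[of "1 + g" "\<bar>z\<bar>"] by (simp add: algebra_simps)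
  then show "\<bar>fst (g, z)\<bar> \<le> (1 + g) * (1 + \<bar>z\<bar>)" using g by simp
qed auto

lemma int_s: "0 < r \<Longrightarrow> integrable (lborel \<Otimes>\<^sub>M lborel) (\<lambda>\<omega>. Wt r \<omega> * ((sqrt (fst \<omega>) * snd \<omega>) * (Tm \<theta> \<sigma> \<omega> - c) ^ j))"
proof (rule integrable_P_T)
  fix g z :: real assume g: "0 < g"
  have "\<bar>sqrt g * z\<bar> = sqrt g * \<bar>z\<bar>" using g by (simp add: abs_mult)
  also have "\<dots> \<le> (1 + g) * (1 + \<bar>z\<bar>)" using g sqrt_le_1p[of g] by (intro mult_mono) auto
  finally show "\<bar>(\<lambda>\<omega>. sqrt (fst \<omega>) * snd \<omega>) (g, z)\<bar> \<le> (1 + g) * (1 + \<bar>z\<bar>)" by simp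
qed auto

abbreviation "NN \<equiv> (lborel \<Otimes>\<^sub>M lborel :: (real \<times> real) measure)"

lemma G_ident:
  assumes r: "0 < r"
  shows "(\<integral>\<omega>. Wt r \<omega> * ((sqrt (fst \<omega>) * snd \<omega>) * (Tm \<theta> \<sigma> \<omega> - c) ^ j) \<partial>NN)
       = \<sigma> * real j * (\<integral>\<omega>. Wt r \<omega> * (fst \<omega> * (Tm \<theta> \<sigma> \<omega> - c) ^ (j - 1)) \<partial>NN)"
proof -
  define Q where "Q \<omega> = Wt r \<omega> * ((sqrt (fst \<omega>) * snd \<omega>) * (Tm \<theta> \<sigma> \<omega> - c) ^ j)
      - \<sigma> * real j * (Wt r \<omega> * (fst \<omega> * (Tm \<theta> \<sigma> \<omega> - c) ^ (j - 1)))" for \<omega>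
  have iQ: "integrable NN Q" unfolding Q_def
    by (intro Bochner_Integration.integrable_diff integrable_mult_right int_s int_b r)
  have inner: "(\<integral>z. Q (g, z) \<partial>lborel) = 0" for g
  proof (cases "0 < g")
    case True
    define \<alpha> where "\<alpha> = \<theta> * g - c"
    define \<gamma> where "\<gamma> = \<sigma> * sqrt g"
    have sg: "sqrt g * sqrt g = g" using True by simp
    have T: "Tm \<theta> \<sigma> (g, z) - c = \<alpha> + \<gamma> * z" for z by (simp add: Tm_def \<alpha>_def \<gamma>_def algebra_simps)
    have "Q (g, z) = (cst r * wgt r g * sqrt g) * (exp (- z\<^sup>2 / 2) * (z * (\<alpha> + \<gamma> * z) ^ j - \<gamma> * real j * (\<alpha> + \<gamma> * z) ^ (j - 1)))" for z
    proof -
      have gs: "\<gamma> * sqrt g = \<sigma> * g" using sg by (simp add: \<gamma>_def mult.assoc)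
      show ?thesis unfolding Q_def T by (simp add: Wt_def algebra_simps gs)
    qed
    then have "(\<integral>z. Q (g, z) \<partial>lborel) = (cst r * wgt r g * sqrt g) * (\<integral>z. exp (- z\<^sup>2 / 2) * (z * (\<alpha> + \<gamma> * z) ^ j - \<gamma> * real j * (\<alpha> + \<gamma> * z) ^ (j - 1)) \<partial>lborel)"
      by simp
    also have "\<dots> = 0" using gauss_ibp[of \<alpha> \<gamma> j] by simp
    finally show ?thesis .
  next
    case False
    then show ?thesis by (simp add: Q_def Wt_def wgt_def)
  qed
  have "(\<integral>\<omega>. Q \<omega> \<partial>NN) = 0"
    using lborel_pair.integral_fst'[OF iQ, symmetric] inner by simp
  then show ?thesis using iQ unfolding Q_def
    by (subst (asm) Bochner_Integration.integral_diff)
       (auto intro!: integrable_mult_right int_s int_b r)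
qed

lemma Gam_ident:
  assumes r: "0 < r"
  shows "(\<integral>\<omega>. Wt r \<omega> * (fst \<omega> * (Tm \<theta> \<sigma> \<omega> - c) ^ j) \<partial>NN) - r * (\<integral>\<omega>. Wt r \<omega> * (Tm \<theta> \<sigma> \<omega> - c) ^ j \<partial>NN)
       = real j * (2 * \<theta>) * (\<integral>\<omega>. Wt r \<omega> * (fst \<omega> * (Tm \<theta> \<sigma> \<omega> - c) ^ (j - 1)) \<partial>NN)
         + real j * \<sigma> * (\<integral>\<omega>. Wt r \<omega> * ((sqrt (fst \<omega>) * snd \<omega>) * (Tm \<theta> \<sigma> \<omega> - c) ^ (j - 1)) \<partial>NN)"
proof -
  define Q where "Q \<omega> = Wt r \<omega> * (fst \<omega> * (Tm \<theta> \<sigma> \<omega> - c) ^ j) - r * (Wt r \<omega> * (Tm \<theta> \<sigma> \<omega> - c) ^ j)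
      - real j * (2 * \<theta>) * (Wt r \<omega> * (fst \<omega> * (Tm \<theta> \<sigma> \<omega> - c) ^ (j - 1)))
      - real j * \<sigma> * (Wt r \<omega> * ((sqrt (fst \<omega>) * snd \<omega>) * (Tm \<theta> \<sigma> \<omega> - c) ^ (j - 1)))" for \<omega>
  have i1: "integrable NN (\<lambda>\<omega>. Wt r \<omega> * (fst \<omega> * (Tm \<theta> \<sigma> \<omega> - c) ^ j))" by (rule int_b[OF r])
  have i2: "integrable NN (\<lambda>\<omega>. r * (Wt r \<omega> * (Tm \<theta> \<sigma> \<omega> - c) ^ j))" by (intro integrable_mult_right int_a[OF r])
  have i3: "integrable NN (\<lambda>\<omega>. real j * (2 * \<theta>) * (Wt r \<omega> * (fst \<omega> * (Tm \<theta> \<sigma> \<omega> - c) ^ (j - 1))))"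
    by (intro integrable_mult_right int_b[OF r])
  have i4: "integrable NN (\<lambda>\<omega>. real j * \<sigma> * (Wt r \<omega> * ((sqrt (fst \<omega>) * snd \<omega>) * (Tm \<theta> \<sigma> \<omega> - c) ^ (j - 1))))"
    by (intro integrable_mult_right int_s[OF r])
  have iQ: "integrable NN Q" unfolding Q_def
    by (intro Bochner_Integration.integrable_diff i1 i2 i3 i4)
  have iQ': "integrable NN (case_prod (\<lambda>g z. Q (g, z)))" using iQ by simp
  have inner: "(\<integral>g. Q (g, z) \<partial>lborel) = 0" for z
  proof -
    have "Q (g, z) = (cst r * exp (- z\<^sup>2 / 2)) * (wgt r g * ((g - r) * (\<theta> * g + \<sigma> * sqrt g * z - c) ^ j
            - real j * (\<theta> * g + \<sigma> * sqrt g * z - c) ^ (j - 1) * (2 * \<theta> * g + \<sigma> * sqrt g * z)))" for g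
      unfolding Q_def by (simp add: Wt_def Tm_def algebra_simps)
    then have "(\<integral>g. Q (g, z) \<partial>lborel) = (cst r * exp (- z\<^sup>2 / 2)) * (\<integral>g. wgt r g * ((g - r) * (\<theta> * g + \<sigma> * sqrt g * z - c) ^ j
            - real j * (\<theta> * g + \<sigma> * sqrt g * z - c) ^ (j - 1) * (2 * \<theta> * g + \<sigma> * sqrt g * z)) \<partial>lborel)"
      by simp
    also have "\<dots> = 0" using gamma_ibp[OF r, where \<theta>=\<theta> and \<sigma>=\<sigma> and c=c and z=z and j=j] by simp
    finally show ?thesis .
  qed
  have "(\<integral>\<omega>. Q \<omega> \<partial>NN) = 0"
    using lborel_pair.integral_snd[OF iQ'] inner by simp
  then have "(\<integral>\<omega>. Wt r \<omega> * (fst \<omega> * (Tm \<theta> \<sigma> \<omega> - c) ^ j) \<partial>NN) - (\<integral>\<omega>. r * (Wt r \<omega> * (Tm \<theta> \<sigma> \<omega> - c) ^ j) \<partial>NN)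
       - (\<integral>\<omega>. real j * (2 * \<theta>) * (Wt r \<omega> * (fst \<omega> * (Tm \<theta> \<sigma> \<omega> - c) ^ (j - 1))) \<partial>NN)
       - (\<integral>\<omega>. real j * \<sigma> * (Wt r \<omega> * ((sqrt (fst \<omega>) * snd \<omega>) * (Tm \<theta> \<sigma> \<omega> - c) ^ (j - 1))) \<partial>NN) = 0"
    unfolding Q_def
    by (simp only: Bochner_Integration.integral_diff[OF Bochner_Integration.integrable_diff[OF Bochner_Integration.integrable_diff[OF i1 i2] i3] i4]
        Bochner_Integration.integral_diff[OF Bochner_Integration.integrable_diff[OF i1 i2] i3]
        Bochner_Integration.integral_diff[OF i1 i2])
  then show ?thesis by (simp only: integral_mult_right_zero)
qed

lemma rec_algebra:
  fixes A B S :: "nat \<Rightarrow> real"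
  assumes L: "\<And>j. A (Suc j) = \<theta> * B j + \<sigma> * S j - c * A j"
    and G: "\<And>j. S j = \<sigma> * real j * B (j - 1)"
    and Gm: "\<And>j. B (Suc j) = r * A (Suc j) + 2 * \<theta> * real (Suc j) * B j + \<sigma> * real (Suc j) * S j"
  shows "A (Suc (Suc (Suc m))) = (2 * \<theta> * real (m + 2) + r * \<theta> - c) * A (Suc (Suc m))
      + (\<sigma>\<^sup>2 * real (m + 2) * real (m + 1) + \<sigma>\<^sup>2 * r * real (m + 2) + 2 * \<theta> * real (m + 2) * c) * A (Suc m)
      + \<sigma>\<^sup>2 * real (m + 2) * real (m + 1) * c * A m"
proof -
  note l2 = L[of "Suc (Suc m)"] and l1 = L[of "Suc m"] and l0 = L[of m]
  note g2 = G[of "Suc (Suc m)"] and g1 = G[of "Suc m"] and g0 = G[of m]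
  note h2 = Gm[of "Suc m"] and h1 = Gm[of m]
  show ?thesis
    apply (simp only: l2 h2 g2 l1 h1 g1 l0 g0 diff_Suc_1)
    apply (simp add: algebra_simps power2_eq_square)
    done
qed

lemma rec_algebra1:
  fixes A B S :: "nat \<Rightarrow> real"
  assumes L: "\<And>j. A (Suc j) = \<theta> * B j + \<sigma> * S j - 0 * A j"
    and G: "\<And>j. S j = \<sigma> * real j * B (j - 1)"
    and Gm: "\<And>j. B (Suc j) = r * A (Suc j) + 2 * \<theta> * real (Suc j) * B j + \<sigma> * real (Suc j) * S j"
    and G0: "B 0 = r * A 0"
  shows "A (Suc (Suc 0)) = \<theta> * (2 + r) * A (Suc 0) + \<sigma>\<^sup>2 * r * A 0"
proof -
  note l1 = L[of "Suc 0"] and l0 = L[of 0]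
  note g1 = G[of "Suc 0"] and g0 = G[of 0]
  note h1 = Gm[of 0]
  show ?thesis
    apply (simp only: l1 h1 g1 l0 g0 G0 diff_Suc_1)
    apply (simp add: algebra_simps power2_eq_square)
    done
qed

definition aa :: "real \<Rightarrow> real \<Rightarrow> real \<Rightarrow> real \<Rightarrow> nat \<Rightarrow> real" where
  "aa r \<theta> \<sigma> c j = (\<integral>\<omega>. Wt r \<omega> * (Tm \<theta> \<sigma> \<omega> - c) ^ j \<partial>NN)"
definition bb :: "real \<Rightarrow> real \<Rightarrow> real \<Rightarrow> real \<Rightarrow> nat \<Rightarrow> real" where
  "bb r \<theta> \<sigma> c j = (\<integral>\<omega>. Wt r \<omega> * (fst \<omega> * (Tm \<theta> \<sigma> \<omega> - c) ^ j) \<partial>NN)"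
definition ss :: "real \<Rightarrow> real \<Rightarrow> real \<Rightarrow> real \<Rightarrow> nat \<Rightarrow> real" where
  "ss r \<theta> \<sigma> c j = (\<integral>\<omega>. Wt r \<omega> * ((sqrt (fst \<omega>) * snd \<omega>) * (Tm \<theta> \<sigma> \<omega> - c) ^ j) \<partial>NN)"

lemma L_ident:
  assumes r: "0 < r"
  shows "aa r \<theta> \<sigma> c (Suc j) = \<theta> * bb r \<theta> \<sigma> c j + \<sigma> * ss r \<theta> \<sigma> c j - c * aa r \<theta> \<sigma> c j"
proof -
  have i1: "integrable NN (\<lambda>\<omega>. \<theta> * (Wt r \<omega> * (fst \<omega> * (Tm \<theta> \<sigma> \<omega> - c) ^ j)))"
    by (intro integrable_mult_right int_b[OF r])
  have i2: "integrable NN (\<lambda>\<omega>. \<sigma> * (Wt r \<omega> * ((sqrt (fst \<omega>) * snd \<omega>) * (Tm \<theta> \<sigma> \<omega> - c) ^ j)))"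
    by (intro integrable_mult_right int_s[OF r])
  have i3: "integrable NN (\<lambda>\<omega>. c * (Wt r \<omega> * (Tm \<theta> \<sigma> \<omega> - c) ^ j))"
    by (intro integrable_mult_right int_a[OF r])
  have pw: "Wt r \<omega> * (Tm \<theta> \<sigma> \<omega> - c) ^ Suc j
      = \<theta> * (Wt r \<omega> * (fst \<omega> * (Tm \<theta> \<sigma> \<omega> - c) ^ j)) + \<sigma> * (Wt r \<omega> * ((sqrt (fst \<omega>) * snd \<omega>) * (Tm \<theta> \<sigma> \<omega> - c) ^ j))
        - c * (Wt r \<omega> * (Tm \<theta> \<sigma> \<omega> - c) ^ j)" for \<omega>
    by (simp add: Tm_def algebra_simps)
  have "aa r \<theta> \<sigma> c (Suc j) = (\<integral>\<omega>. \<theta> * (Wt r \<omega> * (fst \<omega> * (Tm \<theta> \<sigma> \<omega> - c) ^ j)) + \<sigma> * (Wt r \<omega> * ((sqrt (fst \<omega>) * snd \<omega>) * (Tm \<theta> \<sigma> \<omega> - c) ^ j))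
        - c * (Wt r \<omega> * (Tm \<theta> \<sigma> \<omega> - c) ^ j) \<partial>NN)"
    unfolding aa_def pw ..
  also have "\<dots> = \<theta> * bb r \<theta> \<sigma> c j + \<sigma> * ss r \<theta> \<sigma> c j - c * aa r \<theta> \<sigma> c j"
    by (simp only: Bochner_Integration.integral_diff[OF Bochner_Integration.integrable_add[OF i1 i2] i3]
        Bochner_Integration.integral_add[OF i1 i2] integral_mult_right_zero aa_def bb_def ss_def)
  finally show ?thesis .
qed

lemma Gss: "0 < r \<Longrightarrow> ss r \<theta> \<sigma> c j = \<sigma> * real j * bb r \<theta> \<sigma> c (j - 1)"
  unfolding ss_def bb_def by (rule G_ident)

lemma Gmbb: assumes r: "0 < r"
  shows "bb r \<theta> \<sigma> c (Suc j) = r * aa r \<theta> \<sigma> c (Suc j) + 2 * \<theta> * real (Suc j) * bb r \<theta> \<sigma> c j + \<sigma> * real (Suc j) * ss r \<theta> \<sigma> c j"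
  using Gam_ident[OF r, of \<theta> \<sigma> c "Suc j"] unfolding aa_def bb_def ss_def by (simp add: algebra_simps)

lemma G0bb: assumes r: "0 < r" shows "bb r \<theta> \<sigma> c 0 = r * aa r \<theta> \<sigma> c 0"
  using Gam_ident[OF r, of \<theta> \<sigma> c 0] unfolding aa_def bb_def ss_def by simp

lemma transfer:
  assumes r: "0 < r" and s: "0 < \<sigma>"
    and D: "distributed M lborel Y (\<lambda>x. ennreal (vg_density r \<theta> \<sigma> 0 x))"
    and F[measurable]: "F \<in> borel_measurable borel"
  shows "(\<integral>\<omega>. F (Y \<omega>) \<partial>M) = (\<integral>\<omega>. Wt r \<omega> * F (Tm \<theta> \<sigma> \<omega>) \<partial>NN)"
proof -
  have Ym: "Y \<in> measurable M lborel" using D by (simp add: distributed_def)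
  have dY: "distr M lborel Y = density lborel (\<lambda>x. ennreal (vg_density r \<theta> \<sigma> 0 x))"
    using D by (simp add: distributed_def)
  have "(\<integral>\<omega>. F (Y \<omega>) \<partial>M) = (\<integral>x. F x \<partial>distr M lborel Y)"
    by (rule integral_distr[symmetric, OF Ym]) simp
  also have "\<dots> = (\<integral>x. F x \<partial>distr (density NN (\<lambda>\<omega>. ennreal (Wt r \<omega>))) lborel (Tm \<theta> \<sigma>))"
    unfolding dY distr_eq[OF r s] ..
  also have "\<dots> = (\<integral>\<omega>. F (Tm \<theta> \<sigma> \<omega>) \<partial>density NN (\<lambda>\<omega>. ennreal (Wt r \<omega>)))"
    by (rule integral_distr) simp_all
  also have "\<dots> = (\<integral>\<omega>. Wt r \<omega> *\<^sub>R F (Tm \<theta> \<sigma> \<omega>) \<partial>NN)"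
    by (rule integral_density) (auto simp: Wt_nonneg[OF r])
  finally show ?thesis by simp
qed

theorem mainTheorem2:
  fixes M :: "'a measure" and Y :: "'a \<Rightarrow> real"
    and r \<theta> \<sigma> :: real
  assumes "r > 0" and "\<sigma> > 0"
    and "prob_space M"
    and "distributed M lborel Y (\<lambda>x. ennreal (vg_density r \<theta> \<sigma> 0 x))"
  shows "(\<forall>k::nat. k \<ge> 1 \<longrightarrow>
            (LINT \<omega>|M. Y \<omega> ^ (k + 1))
              = \<theta> * (2 * real k + r) * (LINT \<omega>|M. Y \<omega> ^ k)
                + \<sigma>\<^sup>2 * real k * (r + real k - 1) * (LINT \<omega>|M. Y \<omega> ^ (k - 1)))
       \<and> (\<forall>k::nat. k \<ge> 2 \<longrightarrow>
            (LINT \<omega>|M. (Y \<omega> - (LINT \<omega>'|M. Y \<omega>')) ^ (k + 1))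
              = 2 * real k * \<theta> * (LINT \<omega>|M. (Y \<omega> - (LINT \<omega>'|M. Y \<omega>')) ^ k)
                + real k * (\<sigma>\<^sup>2 * (r + real k - 1) + 2 * \<theta>\<^sup>2 * r)
                    * (LINT \<omega>|M. (Y \<omega> - (LINT \<omega>'|M. Y \<omega>')) ^ (k - 1))
                + real k * (real k - 1) * r * \<theta> * \<sigma>\<^sup>2
                    * (LINT \<omega>|M. (Y \<omega> - (LINT \<omega>'|M. Y \<omega>')) ^ (k - 2)))"
proof -
  note r = \<open>r > 0\<close> and s = \<open>\<sigma> > 0\<close> and D = \<open>distributed M lborel Y _\<close>
  interpret P: prob_space M by (rule \<open>prob_space M\<close>)
  have tr: "\<And>c k. (\<integral>\<omega>. (Y \<omega> - c) ^ k \<partial>M) = aa r \<theta> \<sigma> c k"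
    unfolding aa_def by (rule transfer[OF r s D]) simp
  have raw: "(\<integral>\<omega>. Y \<omega> ^ k \<partial>M) = aa r \<theta> \<sigma> 0 k" for k
    using tr[of 0 k] by simp
  have a00: "aa r \<theta> \<sigma> 0 0 = 1" using raw[of 0] by (simp add: P.prob_space)
  have mean: "(\<integral>\<omega>. Y \<omega> \<partial>M) = r * \<theta>"
  proof -
    have "(\<integral>\<omega>. Y \<omega> \<partial>M) = aa r \<theta> \<sigma> 0 (Suc 0)" using raw[of 1] by simp
    also have "\<dots> = r * \<theta>"
      using L_ident[OF r, of \<theta> \<sigma> 0 0] Gss[OF r, of \<theta> \<sigma> 0 0] G0bb[OF r, of \<theta> \<sigma> 0] a00 by simp
    finally show ?thesis .
  qed
  have RA: "aa r \<theta> \<sigma> c (Suc (Suc (Suc m))) = (2 * \<theta> * real (m + 2) + r * \<theta> - c) * aa r \<theta> \<sigma> c (Suc (Suc m))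
      + (\<sigma>\<^sup>2 * real (m + 2) * real (m + 1) + \<sigma>\<^sup>2 * r * real (m + 2) + 2 * \<theta> * real (m + 2) * c) * aa r \<theta> \<sigma> c (Suc m)
      + \<sigma>\<^sup>2 * real (m + 2) * real (m + 1) * c * aa r \<theta> \<sigma> c m" for c m
    by (rule rec_algebra[where B="bb r \<theta> \<sigma> c" and S="ss r \<theta> \<sigma> c"])
       (use L_ident[OF r] Gss[OF r] Gmbb[OF r] in auto)
  have RA1: "aa r \<theta> \<sigma> 0 (Suc (Suc 0)) = \<theta> * (2 + r) * aa r \<theta> \<sigma> 0 (Suc 0) + \<sigma>\<^sup>2 * r * aa r \<theta> \<sigma> 0 0"
    by (rule rec_algebra1[where B="bb r \<theta> \<sigma> 0" and S="ss r \<theta> \<sigma> 0"])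
       (use L_ident[OF r] Gss[OF r] Gmbb[OF r] G0bb[OF r] in auto)
  have part1: "\<forall>k::nat. k \<ge> 1 \<longrightarrow>
            (LINT \<omega>|M. Y \<omega> ^ (k + 1))
              = \<theta> * (2 * real k + r) * (LINT \<omega>|M. Y \<omega> ^ k)
                + \<sigma>\<^sup>2 * real k * (r + real k - 1) * (LINT \<omega>|M. Y \<omega> ^ (k - 1))"
  proof (intro allI impI)
    fix k :: nat assume k: "k \<ge> 1"
    show "(LINT \<omega>|M. Y \<omega> ^ (k + 1))
              = \<theta> * (2 * real k + r) * (LINT \<omega>|M. Y \<omega> ^ k)
                + \<sigma>\<^sup>2 * real k * (r + real k - 1) * (LINT \<omega>|M. Y \<omega> ^ (k - 1))"
    proof (cases "k = 1")
      case True
      then show ?thesis unfolding raw using RA1 by (simp add: algebra_simps)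
    next
      case False
      then obtain m where m: "k = Suc (Suc m)" using k by (metis One_nat_def Suc_le_D le_SucE not_less_eq_eq)
      show ?thesis unfolding raw m using RA[of 0 m] by (simp add: algebra_simps)
    qed
  qed
  have part2: "\<forall>k::nat. k \<ge> 2 \<longrightarrow>
            (LINT \<omega>|M. (Y \<omega> - (LINT \<omega>'|M. Y \<omega>')) ^ (k + 1))
              = 2 * real k * \<theta> * (LINT \<omega>|M. (Y \<omega> - (LINT \<omega>'|M. Y \<omega>')) ^ k)
                + real k * (\<sigma>\<^sup>2 * (r + real k - 1) + 2 * \<theta>\<^sup>2 * r)
                    * (LINT \<omega>|M. (Y \<omega> - (LINT \<omega>'|M. Y \<omega>')) ^ (k - 1))
                + real k * (real k - 1) * r * \<theta> * \<sigma>\<^sup>2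
                    * (LINT \<omega>|M. (Y \<omega> - (LINT \<omega>'|M. Y \<omega>')) ^ (k - 2))"
  proof (intro allI impI)
    fix k :: nat assume k: "k \<ge> 2"
    then obtain m where m: "k = Suc (Suc m)" by (metis add_2_eq_Suc le_Suc_ex)
    show "(LINT \<omega>|M. (Y \<omega> - (LINT \<omega>'|M. Y \<omega>')) ^ (k + 1))
              = 2 * real k * \<theta> * (LINT \<omega>|M. (Y \<omega> - (LINT \<omega>'|M. Y \<omega>')) ^ k)
                + real k * (\<sigma>\<^sup>2 * (r + real k - 1) + 2 * \<theta>\<^sup>2 * r)
                    * (LINT \<omega>|M. (Y \<omega> - (LINT \<omega>'|M. Y \<omega>')) ^ (k - 1))
                + real k * (real k - 1) * r * \<theta> * \<sigma>\<^sup>2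
                    * (LINT \<omega>|M. (Y \<omega> - (LINT \<omega>'|M. Y \<omega>')) ^ (k - 2))"
      unfolding mean tr m using RA[of "r * \<theta>" m] by (simp add: algebra_simps power2_eq_square)
  qed
  show ?thesis using part1 part2 by blast
qed

end
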